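(* Let $g\in V$ be represented by $(T_-,T_+,\sigma)$ and let $D$ be the labelled diagram obtained from the closed labelled strand diagram $D_0(g)$ by applying labelled Rule I repeatedly, in any order, until no edge goes from a merge vertex to a split vertex. (i) If $D$ is a finite disjoint union of closed loops with no vertices, with labels $l_1,\dots,l_k$, then $g$ has finite order, equal to $\operatorname{lcm}(l_1,\dots,l_k)$. (ii) If $D$ has at least one vertex, then $g$ has infinite order; moreover $D$ contains an oriented cycle, and for every oriented cycle of $D$ consisting of merge vertices, the sum of the labels along it is the length of a finite orbit of the action of $g$ on $\mathfrak C$.
   Context: The Cantor set $\mathfrak C=\{0,1\}^{\mathbb N}$. A finite rooted binary tree with $n$ leaves, ordered left to right, determines a partition of $\mathfrak C$ into $n$ cones $u_1\mathfrak C,\dots,u_n\mathfrak C$, where $u_i$ is the finite binary address of the $i$-th leaf. A triple $(T_-,T_+,\sigma)$, with $T_\pm$ having $n$ leaves and $\sigma$ a bijection of $\{1,\dots,n\}$, represents the element $g$ of Thompson's group $V$ given by $g(u_i w)=v_{\sigma(i)}w$, where $u_i$ (resp. $v_j$) are the leaf addresses of $T_-$ (resp. $T_+$). Closed labelled strand diagram $D_0(g)$: a finite directed graph whose $n-1$ split vertices are the internal nodes of $T_-$ (one incoming edge, two outgoing edges ordered left/right, directed root-to-leaves) and whose $n-1$ merge vertices are the internal nodes of $T_+$ (two incoming edges ordered left/right, one outgoing edge, directed leaves-to-root); the $i$-th leaf of $T_-$ is joined to the $\sigma(i)$-th leaf of $T_+$, and the root of $T_+$ is joined to the root of $T_-$,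 erasing bivalent points so these become single edges (a single loop if $n=1$). Each edge carries a nonnegative integer label: $1$ on the edge through the glued roots, $0$ elsewhere. Labelled Rule I: if an edge $e$ with label $y$ goes from a merge vertex $m$ (incoming edges $x_1$ left, $x_2$ right) to a split vertex $s$ (outgoing edges $z_1$ left, $z_2$ right), delete $m,s,e$ and for $i=1,2$ join strand $x_i$ to strand $z_i$ through $e$; each resulting edge gets as label the sum, with multiplicity, of the labels of the old edge-pieces composing it (e.g. $x_1+y+z_1$ and $x_2+y+z_2$ when the four edges are distinct; $x_1+x_2+2y+z_2$ when $x_2=z_1$). Strands closing up on themselves become vertex-free closed loops labelled by the sum of labels along them. *)

theory Defs
  imports Main "HOL-Library.Multiset"
begin

text \<open>The Cantor set is modelled as infinite binary sequences nat => bool;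
  finite binary addresses are bool lists. Convention: False = 0 = left, True = 1 = right.\<close>

datatype tree = Leaf | Node tree tree

fun leaves :: "tree \<Rightarrow> bool list list" where
  "leaves Leaf = [[]]"
| "leaves (Node l r) = map (Cons False) (leaves l) @ map (Cons True) (leaves r)"

fun inodes :: "tree \<Rightarrow> bool list set" where
  "inodes Leaf = {}"
| "inodes (Node l r) = {[]} \<union> Cons False ` inodes l \<union> Cons True ` inodes r"

definition in_cone :: "bool list \<Rightarrow> (nat \<Rightarrow> bool) \<Rightarrow> bool" where
  "in_cone u x \<longleftrightarrow> (\<forall>k<length u. x k = u ! k)"

definition prepend :: "bool list \<Rightarrow> (nat \<Rightarrow> bool) \<Rightarrow> (nat \<Rightarrow> bool)" where
  "prepend u w = (\<lambda>k. if k < length u then u ! k else w (k - length u))"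

text \<open>The element g of V represented by (Tm, Tp, sigma), with sigma a bijection of
  {0..<n} (0-indexed leaves): g(u_i w) = v_(sigma i) w.\<close>
definition velem :: "tree \<Rightarrow> tree \<Rightarrow> (nat \<Rightarrow> nat) \<Rightarrow> (nat \<Rightarrow> bool) \<Rightarrow> (nat \<Rightarrow> bool)" where
  "velem Tm Tp \<sigma> x =
     (let i = (THE i. i < length (leaves Tm) \<and> in_cone (leaves Tm ! i) x)
      in prepend (leaves Tp ! \<sigma> i) (\<lambda>k. x (k + length (leaves Tm ! i))))"

text \<open>Split vertices and merge vertices are named by bool lists (addresses of internal
  nodes of Tm resp. Tp); they live in two separate sets. An edge is identified by its
  outgoing port; tg maps outgoing ports to incoming ports.
  SOut s b: the b-th outgoing edge of split s (False = left);  MOut m: outgoing edge of merge m;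
  SIn s: incoming edge of split s;  MIn m b: b-th incoming edge of merge m (False = left).\<close>

datatype oport = SOut "bool list" bool | MOut "bool list"
datatype iport = SIn "bool list" | MIn "bool list" bool
datatype vtx = SV "bool list" | MV "bool list"

record sdiag =
  sS :: "bool list set"
  sM :: "bool list set"
  stg :: "oport \<Rightarrow> iport"
  slb :: "oport \<Rightarrow> nat"
  sloops :: "nat multiset"        \<comment> \<open>labels of the vertex-free closed loops\<close>

definition oports :: "sdiag \<Rightarrow> oport set" where
  "oports D = {SOut u b | u b. u \<in> sS D} \<union> {MOut w | w. w \<in> sM D}"

fun osrc :: "oport \<Rightarrow> vtx" where
  "osrc (SOut u b) = SV u"
| "osrc (MOut w) = MV w"

fun idst :: "iport \<Rightarrow> vtx" where
  "idst (SIn u) = SV u"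
| "idst (MIn w b) = MV w"

text \<open>Edge leaving the T_+ node w (internal node or leaf): to its parent in T_+,
  or, for the root of T_+, to the root of T_-.\<close>
definition tp_up :: "bool list \<Rightarrow> iport" where
  "tp_up w = (if w = [] then SIn [] else MIn (butlast w) (last w))"

definition D0 :: "tree \<Rightarrow> tree \<Rightarrow> (nat \<Rightarrow> nat) \<Rightarrow> sdiag" where
  "D0 Tm Tp \<sigma> =
     \<lparr> sS = inodes Tm,
       sM = inodes Tp,
       stg = (\<lambda>p. case p of
                 SOut u b \<Rightarrow>
                   (if u @ [b] \<in> inodes Tm then SIn (u @ [b])
                    else tp_up (leaves Tp ! \<sigma> (THE i. i < length (leaves Tm) \<and> leaves Tm ! i = u @ [b])))
               | MOut w \<Rightarrow> tp_up w),
       slb = (\<lambda>p. if p = MOut [] then 1 else 0),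
       sloops = (if length (leaves Tm) = 1 then {#1#} else {#}) \<rparr>"

text \<open>Following a strand from outgoing port o through the deleted pair (m,s): whenever it
  enters m on side b, it continues through the edge e = MOut m and leaves s on side b. Fuel 3 is more than enough
  (at most two passes through e are possible).\<close>
fun chase :: "nat \<Rightarrow> (oport \<Rightarrow> iport) \<Rightarrow> (oport \<Rightarrow> nat) \<Rightarrow> bool list \<Rightarrow> bool list \<Rightarrow> oport
              \<Rightarrow> iport \<times> nat" where
  "chase 0 t l m s p = (t p, l p)"
| "chase (Suc k) t l m s p =
     (case t p of
        MIn w b \<Rightarrow> (if w = m then (let r = chase k t l m s (SOut s b) in (fst r, l p + l (MOut m) + snd r))
                    else (t p, l p))
      | SIn u \<Rightarrow> (t p, l p))"

text \<open>Closed loops created by Rule I (strands through m,s closing on themselves).\<close>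
definition new_loops :: "sdiag \<Rightarrow> bool list \<Rightarrow> bool list \<Rightarrow> nat multiset" where
  "new_loops D m s =
     (let t = stg D; y = slb D (MOut m); z1 = slb D (SOut s False); z2 = slb D (SOut s True)
      in (if t (SOut s False) = MIn m False then {# z1 + y #} else {#})
       + (if t (SOut s True) = MIn m True then {# z2 + y #} else {#})
       + (if t (SOut s False) = MIn m True \<and> t (SOut s True) = MIn m False
          then {# z1 + z2 + 2 * y #} else {#}))"

definition rule1_apply :: "sdiag \<Rightarrow> bool list \<Rightarrow> bool list \<Rightarrow> sdiag" where
  "rule1_apply D m s =
     \<lparr> sS = sS D - {s},
       sM = sM D - {m},
       stg = (\<lambda>p. fst (chase 3 (stg D) (slb D) m s p)),
       slb = (\<lambda>p. snd (chase 3 (stg D) (slb D) m s p)),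
       sloops = sloops D + new_loops D m s \<rparr>"

definition rule1_step :: "sdiag \<Rightarrow> sdiag \<Rightarrow> bool" where
  "rule1_step D D' \<longleftrightarrow>
     (\<exists>m \<in> sM D. \<exists>s \<in> sS D. stg D (MOut m) = SIn s \<and> D' = rule1_apply D m s)"

definition reduced :: "sdiag \<Rightarrow> bool" where
  "reduced D \<longleftrightarrow> \<not> (\<exists>m \<in> sM D. \<exists>s \<in> sS D. stg D (MOut m) = SIn s)"

definition is_cycle :: "sdiag \<Rightarrow> oport list \<Rightarrow> bool" where
  "is_cycle D es \<longleftrightarrow> es \<noteq> [] \<and> set es \<subseteq> oports D \<and> distinct (map osrc es) \<and>
     (\<forall>i < length es. idst (stg D (es ! i)) = osrc (es ! ((i + 1) mod length es)))"

definition merge_cycle :: "sdiag \<Rightarrow> oport list \<Rightarrow> bool" where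
  "merge_cycle D es \<longleftrightarrow> is_cycle D es \<and> (\<forall>e \<in> set es. \<exists>w. osrc e = MV w)"

definition finite_orbit_length :: "('a \<Rightarrow> 'a) \<Rightarrow> nat \<Rightarrow> bool" where
  "finite_orbit_length f L \<longleftrightarrow>
     (\<exists>x. finite (range (\<lambda>j. (f ^^ j) x)) \<and> card (range (\<lambda>j. (f ^^ j) x)) = L)"

end

theory Submission
  imports Defs
begin


lemma Cons_in_image[simp]: "(a # x \<in> Cons b ` S) = (a = b \<and> x \<in> S)"
  by auto

lemma leaves_ne: "leaves T \<noteq> []"
  by (induction T) auto

lemma distinct_leaves: "distinct (leaves T)"
  by (induction T) (auto simp: distinct_map)

lemma leaves_prefix_free: "u \<in> set (leaves T) \<Longrightarrow> u @ r \<in> set (leaves T) \<Longrightarrow> r = []"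
proof (induction T arbitrary: u)
  case Leaf then show ?case by auto
next
  case (Node l r') then show ?case by (cases u) auto
qed

lemma prefix_inode: "u @ v \<in> set (leaves T) \<Longrightarrow> v \<noteq> [] \<Longrightarrow> u \<in> inodes T"
proof (induction T arbitrary: u)
  case Leaf then show ?case by auto
next
  case (Node l r) then show ?case by (cases u) auto
qed

lemma child_leaf: "u \<in> inodes T \<Longrightarrow> u @ [b] \<notin> inodes T \<Longrightarrow> u @ [b] \<in> set (leaves T)"
proof (induction T arbitrary: u)
  case Leaf then show ?case by auto
next
  case (Node l r)
  show ?case
  proof (cases u)
    case Nil
    then show ?thesis using Node.prems by (cases b; cases l; cases r) auto
  next
    case (Cons a u')
    then show ?thesis using Node by (cases a) auto
  qed
qed

lemma inode_butlast: "w \<in> inodes T \<Longrightarrow> w \<noteq> [] \<Longrightarrow> butlast w \<in> inodes T"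
proof (induction T arbitrary: w)
  case Leaf then show ?case by auto
next
  case (Node l r)
  then obtain a list where w: "w = a # list" by (cases w) auto
  show ?case
  proof (cases "list = []")
    case True then show ?thesis using w by simp
  next
    case False
    then have "butlast w = a # butlast list" using w by simp
    moreover have "list \<in> (if a then inodes r else inodes l)" using Node.prems w by (cases a) auto
    ultimately show ?thesis using Node.IH False by (cases a) auto
  qed
qed

lemma leaf_butlast: "v \<in> set (leaves T) \<Longrightarrow> v \<noteq> [] \<Longrightarrow> butlast v \<in> inodes T"
  using prefix_inode[of "butlast v" "[last v]" T] by simp

lemma leaves_inodes_disj: "u \<in> set (leaves T) \<Longrightarrow> u \<notin> inodes T"
proof (induction T arbitrary: u)
  case Leaf then show ?case by auto
next
  case (Node l r) then show ?case by (cases u) auto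
qed

lemma finite_inodes: "finite (inodes T)"
  by (induction T) auto

lemma card_inodes: "card (inodes T) + 1 = length (leaves T)"
proof (induction T)
  case Leaf then show ?case by auto
next
  case (Node l r)
  have d: "({[]} \<union> Cons False ` inodes l) \<inter> Cons True ` inodes r = {}" by auto
  have d2: "{[]} \<inter> Cons False ` inodes l = {}" by auto
  have "card (inodes (Node l r)) = 1 + card (inodes l) + card (inodes r)"
    using d d2 finite_inodes[of l] finite_inodes[of r]
    by (simp add: card_Un_disjoint card_image)
  then show ?case using Node by simp
qed

lemma Leaf_iff: "T = Leaf \<longleftrightarrow> length (leaves T) = 1"
proof (cases T)
  case (Node l r) then show ?thesis using leaves_ne[of l] leaves_ne[of r] by (cases "leaves l"; cases "leaves r") auto
qed auto

lemma root_inode: "T \<noteq> Leaf \<Longrightarrow> [] \<in> inodes T"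
  by (cases T) auto

lemma root_not_leaf: "T \<noteq> Leaf \<Longrightarrow> [] \<notin> set (leaves T)"
  by (cases T) auto

fun height :: "tree \<Rightarrow> nat" where
  "height Leaf = 0" | "height (Node l r) = Suc (max (height l) (height r))"

lemma inode_len: "u \<in> inodes T \<Longrightarrow> length u < height T"
  by (induction T arbitrary: u) fastforce+

lemma covering: "\<exists>u \<in> set (leaves T). in_cone u x"
proof (induction T arbitrary: x)
  case Leaf then show ?case by (auto simp: in_cone_def)
next
  case (Node l r)
  show ?case
  proof (cases "x 0")
    case True
    obtain u where "u \<in> set (leaves r)" "in_cone u (\<lambda>k. x (Suc k))" using Node by blast
    then show ?thesis using True
      by (intro bexI[of _ "True # u"]) (auto simp: in_cone_def less_Suc_eq_0_disj)
  next
    case False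
    obtain u where "u \<in> set (leaves l)" "in_cone u (\<lambda>k. x (Suc k))" using Node by blast
    then show ?thesis using False
      by (intro bexI[of _ "False # u"]) (auto simp: in_cone_def less_Suc_eq_0_disj)
  qed
qed

lemma cone_prefix: "in_cone u x \<Longrightarrow> in_cone v x \<Longrightarrow> length u \<le> length v \<Longrightarrow> v = u @ drop (length u) v"
proof -
  assume a: "in_cone u x" "in_cone v x" "length u \<le> length v"
  have "take (length u) v = u"
    using a by (intro nth_equalityI) (auto simp: in_cone_def)
  then show ?thesis by (metis append_take_drop_id)
qed

lemma cone_unique: "u \<in> set (leaves T) \<Longrightarrow> v \<in> set (leaves T) \<Longrightarrow> in_cone u x \<Longrightarrow> in_cone v x \<Longrightarrow> u = v"
proof -
  assume a: "u \<in> set (leaves T)" "v \<in> set (leaves T)" "in_cone u x" "in_cone v x"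
  show "u = v"
  proof (cases "length u \<le> length v")
    case True
    then show ?thesis using cone_prefix[OF a(3,4)] leaves_prefix_free[OF a(1)] a(2) by (metis append_Nil2)
  next
    case False
    then show ?thesis using cone_prefix[OF a(4,3)] leaves_prefix_free[OF a(2)] a(1) by (metis append_Nil2 nat_le_linear)
  qed
qed

lemma in_cone_prepend: "in_cone u (prepend u z)"
  by (auto simp: in_cone_def prepend_def)

lemma prepend_drop: "in_cone u x \<Longrightarrow> prepend u (\<lambda>k. x (k + length u)) = x"
  by (auto simp: in_cone_def prepend_def fun_eq_iff)

lemma prepend_append: "prepend (u @ v) z = prepend u (prepend v z)"
  by (auto simp: prepend_def fun_eq_iff nth_append)

lemma prepend_Nil[simp]: "prepend [] z = z"
  by (auto simp: prepend_def)

lemma prepend_inj: "u \<in> set (leaves T) \<Longrightarrow> v \<in> set (leaves T) \<Longrightarrow> prepend u z = prepend v z' \<Longrightarrow> u = v \<and> z = z'"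
proof -
  assume a: "u \<in> set (leaves T)" "v \<in> set (leaves T)" "prepend u z = prepend v z'"
  have "u = v" using cone_unique[OF a(1,2) in_cone_prepend, of z] a(3) in_cone_prepend[of v z'] by simp
  moreover have "z = z'"
  proof
    fix k show "z k = z' k" using fun_cong[OF a(3), of "k + length u"] \<open>u = v\<close> by (simp add: prepend_def)
  qed
  ultimately show ?thesis by simp
qed



definition shiftS :: "(nat \<Rightarrow> bool) \<Rightarrow> (nat \<Rightarrow> bool)" where
  "shiftS x = (\<lambda>k. x (Suc k))"

definition stepG :: "sdiag \<Rightarrow> oport \<times> (nat \<Rightarrow> bool) \<Rightarrow> oport \<times> (nat \<Rightarrow> bool)" where
  "stepG D st = (case stg D (fst st) of SIn s \<Rightarrow> (SOut s (snd st 0), shiftS (snd st))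
                                  | MIn w b \<Rightarrow> (MOut w, prepend [b] (snd st)))"

definition vtxs :: "sdiag \<Rightarrow> vtx set" where
  "vtxs D = SV ` sS D \<union> MV ` sM D"

fun ncr :: "('s \<Rightarrow> 's) \<Rightarrow> ('s \<Rightarrow> bool) \<Rightarrow> 's \<Rightarrow> nat \<Rightarrow> nat" where
  "ncr F c s 0 = 0"
| "ncr F c s (Suc n) = ncr F c s n + (if c ((F ^^ n) s) then 1 else 0)"

definition cyc :: "('s \<Rightarrow> 's) \<Rightarrow> ('s \<Rightarrow> bool) \<Rightarrow> 's \<Rightarrow> nat \<Rightarrow> nat \<Rightarrow> bool" where
  "cyc F c s Q l \<longleftrightarrow> 0 < Q \<and> (F ^^ Q) s = s \<and> (\<forall>d. 0 < d \<and> d < Q \<longrightarrow> (F ^^ d) s \<noteq> s) \<and> ncr F c s Q = l"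

lemma fpa: "(F ^^ (a + b)) s = (F ^^ b) ((F ^^ a) s)"
  by (metis add.commute comp_apply funpow_add)

lemma ncr_add: "ncr F c s (a + b) = ncr F c s a + ncr F c ((F ^^ a) s) b"
  by (induction b) (auto simp: fpa)

lemma ncr_mono: "a \<le> b \<Longrightarrow> ncr F c s a \<le> ncr F c s b"
  using ncr_add[of F c s a "b - a"] by simp

lemma ncr_strict: "c ((F ^^ a) s) \<Longrightarrow> a < b \<Longrightarrow> ncr F c s a + 1 \<le> ncr F c s b"
  using ncr_mono[where a="Suc a" and b=b and F=F and c=c and s=s] by simp

lemma ncr_one: "ncr F c s 1 = (if c s then 1 else 0)"
  using ncr.simps(2)[of F c s 0] by simp

lemma per_funpow: "(F ^^ Q) s = s \<Longrightarrow> (F ^^ (k * Q)) s = s"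
  by (induction k) (auto simp: funpow_add)

lemma per_ncr: "(F ^^ Q) s = s \<Longrightarrow> ncr F c s (k * Q) = k * ncr F c s Q"
proof (induction k)
  case (Suc k)
  have "ncr F c s (Suc k * Q) = ncr F c s (k * Q) + ncr F c ((F ^^ (k * Q)) s) Q"
    by (metis add.commute mult_Suc ncr_add)
  then show ?case using Suc per_funpow[OF Suc.prems] by simp
qed simp

lemma cyc_dvd: "cyc F c s Q l \<Longrightarrow> (F ^^ d) s = s \<Longrightarrow> Q dvd d"
proof -
  assume a: "cyc F c s Q l" "(F ^^ d) s = s"
  have Q: "0 < Q" "(F ^^ Q) s = s" using a(1) by (auto simp: cyc_def)
  have "(F ^^ d) s = (F ^^ (d mod Q)) ((F ^^ (d div Q * Q)) s)"
    by (metis div_mult_mod_eq funpow_add comp_apply add.commute)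
  then have "(F ^^ (d mod Q)) s = s" using a(2) per_funpow[OF Q(2)] by simp
  moreover have "d mod Q < Q" using Q by simp
  ultimately have "d mod Q = 0" using a(1) unfolding cyc_def by (meson neq0_conv)
  then show ?thesis by auto
qed

lemma cyc_rot: "cyc F c s Q l \<Longrightarrow> cyc F c ((F ^^ a) s) Q l"
proof -
  assume a: "cyc F c s Q l"
  have Q: "0 < Q" "(F ^^ Q) s = s" using a by (auto simp: cyc_def)
  have p: "(F ^^ Q) ((F ^^ a) s) = (F ^^ a) s"
    by (metis Q(2) add.commute comp_apply funpow_add)
  have m: "(F ^^ d) ((F ^^ a) s) \<noteq> (F ^^ a) s" if "0 < d" "d < Q" for d
  proof
    assume e: "(F ^^ d) ((F ^^ a) s) = (F ^^ a) s"
    have "(F ^^ (a * Q - a)) ((F ^^ d) ((F ^^ a) s)) = (F ^^ (a * Q - a)) ((F ^^ a) s)" using e by simp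
    moreover have "a \<le> a * Q" using Q by simp
    ultimately have "(F ^^ (a * Q + d)) s = (F ^^ (a * Q)) s"
      by (smt (verit) add.commute comp_apply funpow_add le_add_diff_inverse2)
    then have "(F ^^ d) s = s"
      by (metis Q(2) add.commute comp_apply funpow_add per_funpow)
    then show False using a that by (auto simp: cyc_def)
  qed
  have "ncr F c s (a + Q) = ncr F c s a + ncr F c ((F ^^ a) s) Q" by (rule ncr_add)
  moreover have "ncr F c s (Q + a) = ncr F c s Q + ncr F c ((F ^^ Q) s) a" by (rule ncr_add)
  ultimately have "ncr F c ((F ^^ a) s) Q = l" using a Q by (simp add: cyc_def add.commute)
  then show ?thesis using p m Q by (simp add: cyc_def)
qed

definition per :: "('b \<Rightarrow> 'b) \<Rightarrow> 'b \<Rightarrow> nat \<Rightarrow> bool" where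
  "per g z l \<longleftrightarrow> 0 < l \<and> (g ^^ l) z = z \<and> (\<forall>j. 0 < j \<and> j < l \<longrightarrow> (g ^^ j) z \<noteq> z)"

lemma cross_times:
  assumes H: "\<And>z. \<exists>k>0. (F ^^ k) (cr z) = cr (g z) \<and> ncr F c (cr z) k = 1"
  shows "\<exists>t. (F ^^ t) (cr z) = cr ((g ^^ j) z) \<and> ncr F c (cr z) t = j"
proof (induction j)
  case 0 show ?case by (intro exI[of _ 0]) simp
next
  case (Suc j)
  then obtain t where t: "(F ^^ t) (cr z) = cr ((g ^^ j) z)" "ncr F c (cr z) t = j" by blast
  obtain k where k: "(F ^^ k) (cr ((g ^^ j) z)) = cr (g ((g ^^ j) z))" "ncr F c (cr ((g ^^ j) z)) k = 1"
    using H by blast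
  show ?case
    by (intro exI[of _ "t + k"]) (simp add: ncr_add t k fpa)
qed

lemma cyc_per:
  assumes H: "\<And>z. \<exists>k>0. (F ^^ k) (cr z) = cr (g z) \<and> ncr F c (cr z) k = 1"
    and cr: "\<And>z. c (cr z)" "inj cr"
    and cy: "cyc F c (cr z) Q l"
  shows "per g z l"
proof -
  have Q: "0 < Q" "(F ^^ Q) (cr z) = cr z" "ncr F c (cr z) Q = l"
    "\<And>d. 0 < d \<Longrightarrow> d < Q \<Longrightarrow> (F ^^ d) (cr z) \<noteq> cr z" using cy by (auto simp: cyc_def)
  have l0: "0 < l" using ncr_strict[where a=0 and s="cr z" and b=Q and F=F and c=c] Q cr by simp
  obtain t where t: "(F ^^ t) (cr z) = cr ((g ^^ l) z)" "ncr F c (cr z) t = l"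
    using cross_times[where F=F and cr=cr and g=g and c=c, OF H] by blast
  have "t = Q"
  proof (rule ccontr)
    assume "t \<noteq> Q"
    then consider "t < Q" | "Q < t" by linarith
    then show False
    proof cases
      case 1 then show ?thesis using ncr_strict[where a=t and s="cr z" and b=Q and F=F and c=c] t Q cr by simp
    next
      case 2 then show ?thesis using ncr_strict[where a=Q and s="cr z" and b=t and F=F and c=c] t Q cr by simp
    qed
  qed
  then have gl: "(g ^^ l) z = z" using t Q cr(2) by (metis injD)
  have "(g ^^ j) z \<noteq> z" if j: "0 < j" "j < l" for j
  proof
    assume e: "(g ^^ j) z = z"
    obtain t where t: "(F ^^ t) (cr z) = cr ((g ^^ j) z)" "ncr F c (cr z) t = j"
      using cross_times[where F=F and cr=cr and g=g and c=c, OF H] by blast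
    then have "(F ^^ t) (cr z) = cr z" using e by simp
    then have "Q dvd t" using cyc_dvd[OF cy] by blast
    then obtain k where "t = k * Q" by (metis dvd_def mult.commute)
    then have "j = k * l" using t per_ncr[OF Q(2), of c k] Q by simp
    then show False using j by (cases k) auto
  qed
  then show ?thesis using l0 gl by (simp add: per_def)
qed

lemma per_inj:
  assumes "per g z l"
  shows "inj_on (\<lambda>j. (g ^^ j) z) {..<l}"
proof -
  have l: "0 < l" "(g ^^ l) z = z" "\<And>j. 0 < j \<Longrightarrow> j < l \<Longrightarrow> (g ^^ j) z \<noteq> z"
    using assms by (auto simp: per_def)
  show ?thesis
  proof (rule inj_onI)
    fix i j assume ij: "i \<in> {..<l}" "j \<in> {..<l}" "(g ^^ i) z = (g ^^ j) z"
    show "i = j"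
    proof (rule ccontr)
      assume "i \<noteq> j"
      then consider "i < j" | "j < i" by linarith
      then show False
      proof cases
        case 1
        have "(g ^^ (l - i)) ((g ^^ i) z) = (g ^^ (l - i)) ((g ^^ j) z)" using ij by simp
        moreover have "(g ^^ (l - i)) ((g ^^ i) z) = (g ^^ l) z"
          using fpa[where F=g and a=i and b="l - i" and s=z] 1 ij by simp
        moreover have "(g ^^ (l - i)) ((g ^^ j) z) = (g ^^ (j - i)) ((g ^^ l) z)"
          using fpa[where F=g and a=j and b="l - i" and s=z] fpa[where F=g and a=l and b="j - i" and s=z] 1 ij by (simp add: add.commute)
        ultimately have "(g ^^ l) z = (g ^^ (j - i)) ((g ^^ l) z)" by simp
        moreover have "j - i < l" "0 < j - i" using ij 1 by auto
        ultimately show False using l(2) l(3)[of "j - i"] by simp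
      next
        case 2
        have "(g ^^ (l - j)) ((g ^^ i) z) = (g ^^ (l - j)) ((g ^^ j) z)" using ij by simp
        moreover have "(g ^^ (l - j)) ((g ^^ j) z) = (g ^^ l) z"
          using fpa[where F=g and a=j and b="l - j" and s=z] 2 ij by simp
        moreover have "(g ^^ (l - j)) ((g ^^ i) z) = (g ^^ (i - j)) ((g ^^ l) z)"
          using fpa[where F=g and a=i and b="l - j" and s=z] fpa[where F=g and a=l and b="i - j" and s=z] 2 ij by (simp add: add.commute)
        ultimately have "(g ^^ (i - j)) ((g ^^ l) z) = (g ^^ l) z" by simp
        moreover have "i - j < l" "0 < i - j" using ij 2 by auto
        ultimately show False using l(2) l(3)[of "i - j"] by simp
      qed
    qed
  qed
qed

lemma per_orbit:
  assumes "per g z l"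
  shows "finite (range (\<lambda>j. (g ^^ j) z)) \<and> card (range (\<lambda>j. (g ^^ j) z)) = l"
proof -
  have l: "0 < l" "(g ^^ l) z = z" "\<And>j. 0 < j \<Longrightarrow> j < l \<Longrightarrow> (g ^^ j) z \<noteq> z"
    using assms by (auto simp: per_def)
  have m: "(g ^^ j) z = (g ^^ (j mod l)) z" for j
  proof -
    have "(g ^^ (j div l * l)) z = z" using per_funpow[where F=g and Q=l and s=z and k="j div l"] l by simp
    then show ?thesis
      by (metis add.commute comp_apply div_mult_mod_eq funpow_add)
  qed
  have r: "range (\<lambda>j. (g ^^ j) z) = (\<lambda>j. (g ^^ j) z) ` {..<l}"
  proof
    show "range (\<lambda>j. (g ^^ j) z) \<subseteq> (\<lambda>j. (g ^^ j) z) ` {..<l}"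
      using m l(1) by (auto intro!: image_eqI[where x="_ mod l"])
  qed auto
  have i: "inj_on (\<lambda>j. (g ^^ j) z) {..<l}" using per_inj[OF assms] .
  show ?thesis using r i by (simp add: card_image)
qed



lemma shift_prepend: "shiftS (prepend (c # r) x) = prepend r x"
  by (auto simp: shiftS_def prepend_def fun_eq_iff)

lemma prepend_Cons0: "prepend (c # r) x 0 = c"
  by (auto simp: prepend_def)

lemma fps: "(F ^^ Suc n) s = (F ^^ n) (F s)"
  by (metis funpow_Suc_right comp_apply)

lemma ncr_Suc': "ncr F c s (Suc n) = (if c s then 1 else 0) + ncr F c (F s) n"
  using ncr_add[where a=1 and b=n and F=F and c=c and s=s] ncr_one[of F c s] by simp

locale VS =
  fixes Tm Tp :: tree and \<sigma> :: "nat \<Rightarrow> nat"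
  assumes len: "length (leaves Tm) = length (leaves Tp)"
    and bij: "bij_betw \<sigma> {..<length (leaves Tm)} {..<length (leaves Tm)}"
    and ntm: "Tm \<noteq> Leaf"
begin

abbreviation "N \<equiv> length (leaves Tm)"
definition "DD = D0 Tm Tp \<sigma>"
definition "F = stepG DD"
definition "g = velem Tm Tp \<sigma>"
definition crs :: "oport \<times> (nat \<Rightarrow> bool) \<Rightarrow> bool" where "crs st \<longleftrightarrow> fst st = MOut []"
abbreviation cr :: "(nat \<Rightarrow> bool) \<Rightarrow> oport \<times> (nat \<Rightarrow> bool)" where "cr z \<equiv> (MOut [], z)"

lemma ntp: "Tp \<noteq> Leaf" using len ntm Leaf_iff by auto

lemma sig: "i < N \<Longrightarrow> \<sigma> i < N" using bij bij_betwE by blast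

lemma sig_inj: "i < N \<Longrightarrow> j < N \<Longrightarrow> \<sigma> i = \<sigma> j \<Longrightarrow> i = j"
  using bij bij_betw_imp_inj_on inj_onD by (metis lessThan_iff)

lemma leaf_idx: "u \<in> set (leaves Tm) \<Longrightarrow> \<exists>i<N. leaves Tm ! i = u \<and> (THE i. i < N \<and> leaves Tm ! i = u) = i"
proof -
  assume "u \<in> set (leaves Tm)"
  then obtain i where i: "i < N" "leaves Tm ! i = u" by (auto simp: in_set_conv_nth)
  have "(THE i. i < N \<and> leaves Tm ! i = u) = i"
    using i distinct_leaves[of Tm] by (auto intro!: the_equality simp: nth_eq_iff_index_eq)
  then show ?thesis using i by blast
qed

lemma stg_S: "stg DD (SOut u b) = (if u @ [b] \<in> inodes Tm then SIn (u @ [b])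
   else tp_up (leaves Tp ! \<sigma> (THE i. i < N \<and> leaves Tm ! i = u @ [b])))"
  by (simp add: DD_def D0_def)

lemma stg_M: "stg DD (MOut w) = tp_up w"
  by (simp add: DD_def D0_def)

lemma slb_DD: "slb DD p = (if p = MOut [] then 1 else 0)"
  by (simp add: DD_def D0_def)

lemma sS_DD: "sS DD = inodes Tm" and sM_DD: "sM DD = inodes Tp" and loops_DD: "sloops DD = {#}"
  using ntm Leaf_iff[of Tm] by (auto simp: DD_def D0_def)

lemma leafTp: "i < N \<Longrightarrow> leaves Tp ! \<sigma> i \<in> set (leaves Tp) \<and> leaves Tp ! \<sigma> i \<noteq> []"
  using sig[of i] len root_not_leaf[OF ntp] by (metis nth_mem)

lemma F_int: "u @ [b] \<in> inodes Tm \<Longrightarrow> F (SOut u b, x) = (SOut (u @ [b]) (x 0), shiftS x)"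
  by (simp add: F_def stepG_def stg_S)

lemma F_leaf: "i < N \<Longrightarrow> leaves Tm ! i = u @ [b] \<Longrightarrow>
   F (SOut u b, x) = (MOut (butlast (leaves Tp ! \<sigma> i)), prepend [last (leaves Tp ! \<sigma> i)] x)"
proof -
  assume a: "i < N" "leaves Tm ! i = u @ [b]"
  then have m: "u @ [b] \<in> set (leaves Tm)" by (metis nth_mem)
  then have ni: "u @ [b] \<notin> inodes Tm" using leaves_inodes_disj by blast
  obtain j where j: "j < N" "leaves Tm ! j = u @ [b]" "(THE i. i < N \<and> leaves Tm ! i = u @ [b]) = j"
    using leaf_idx[OF m] by blast
  have "j = i" using j a distinct_leaves[of Tm] by (metis nth_eq_iff_index_eq)
  then show ?thesis using ni j leafTp[OF a(1)]
    by (simp add: F_def stepG_def stg_S tp_up_def)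
qed

lemma F_up: "w \<noteq> [] \<Longrightarrow> F (MOut w, x) = (MOut (butlast w), prepend [last w] x)"
  by (simp add: F_def stepG_def stg_M tp_up_def)

lemma F_root: "F (MOut [], x) = (SOut [] (x 0), shiftS x)"
  by (simp add: F_def stepG_def stg_M tp_up_def)

lemma ascend: "(F ^^ length w) (MOut w, x) = (MOut [], prepend w x) \<and> ncr F crs (MOut w, x) (length w) = 0"
proof (induction w arbitrary: x rule: rev_induct)
  case Nil then show ?case by simp
next
  case (snoc b w)
  have "(F ^^ length (w @ [b])) (MOut (w @ [b]), x) = (F ^^ length w) (MOut w, prepend [b] x)"
    by (simp del: funpow.simps(2) add: fps F_up)
  moreover have "ncr F crs (MOut (w @ [b]), x) (length (w @ [b])) = ncr F crs (MOut w, prepend [b] x) (length w)"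
    by (simp only: length_append_singleton ncr_Suc') (simp add: crs_def F_up)
  ultimately show ?case using snoc[of "prepend [b] x"] by (simp add: prepend_append[symmetric])
qed

lemma descend: "a @ r \<in> set (leaves Tm) \<Longrightarrow> r \<noteq> [] \<Longrightarrow>
  (F ^^ (length r - 1)) (SOut a (hd r), prepend (tl r) x) = (SOut (butlast (a @ r)) (last r), x) \<and>
  ncr F crs (SOut a (hd r), prepend (tl r) x) (length r - 1) = 0"
proof (induction r arbitrary: a)
  case Nil then show ?case by simp
next
  case (Cons b r)
  show ?case
  proof (cases r)
    case Nil then show ?thesis by simp
  next
    case (Cons c r')
    have ai: "a @ [b] \<in> inodes Tm" using prefix_inode[of "a @ [b]" "c # r'" Tm] Cons.prems Cons by simp
    have st: "F (SOut a b, prepend (c # r') x) = (SOut (a @ [b]) c, prepend r' x)"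
      using F_int[OF ai] by (simp add: shift_prepend prepend_Cons0)
    have ih: "(F ^^ (length r - 1)) (SOut (a @ [b]) (hd r), prepend (tl r) x) = (SOut (butlast ((a @ [b]) @ r)) (last r), x) \<and>
      ncr F crs (SOut (a @ [b]) (hd r), prepend (tl r) x) (length r - 1) = 0"
      using Cons.IH[of "a @ [b]"] Cons.prems Cons by simp
    have e: "length (b # r) - 1 = Suc (length r - 1)" using Cons by simp
    show ?thesis unfolding e using ih st Cons
      by (simp only: fps ncr_Suc') (simp del: funpow.simps(2) add: crs_def)
  qed
qed

lemma g_eq: "i < N \<Longrightarrow> in_cone (leaves Tm ! i) y \<Longrightarrow> g y = prepend (leaves Tp ! \<sigma> i) (\<lambda>k. y (k + length (leaves Tm ! i)))"
proof -
  assume a: "i < N" "in_cone (leaves Tm ! i) y"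
  have "(THE i. i < N \<and> in_cone (leaves Tm ! i) y) = i"
  proof (rule the_equality)
    fix j assume j: "j < N \<and> in_cone (leaves Tm ! j) y"
    then have "leaves Tm ! j = leaves Tm ! i" using cone_unique[of "leaves Tm ! j" Tm "leaves Tm ! i" y] a by auto
    then show "j = i" using j a distinct_leaves[of Tm] by (simp add: nth_eq_iff_index_eq)
  qed (use a in auto)
  then show ?thesis by (simp add: g_def velem_def)
qed

lemma leaf_of: "\<exists>i<N. in_cone (leaves Tm ! i) y"
  using covering[of Tm y] by (metis in_set_conv_nth)

lemma g_step: "\<exists>k>0. (F ^^ k) (cr y) = cr (g y) \<and> ncr F crs (cr y) k = 1"
proof -
  obtain i where i: "i < N" "in_cone (leaves Tm ! i) y" using leaf_of by blast
  define u where "u = leaves Tm ! i"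
  define v where "v = leaves Tp ! \<sigma> i"
  define z where "z = (\<lambda>k. y (k + length u))"
  have um: "u \<in> set (leaves Tm)" using i by (simp add: u_def)
  have un: "u \<noteq> []" using root_not_leaf[OF ntm] um by auto
  have vn: "v \<noteq> []" using leafTp[OF i(1)] by (simp add: v_def)
  have yu: "y = prepend u z" using prepend_drop[of u y] i by (simp add: u_def z_def)
  have gy: "g y = prepend v z" using g_eq[OF i] by (simp add: u_def v_def z_def)
  have s1: "F (cr y) = (SOut [] (hd u), prepend (tl u) z)"
  proof -
    obtain h t where ht: "u = h # t" using un by (cases u) auto
    have "y 0 = hd u" "shiftS y = prepend (tl u) z" using yu ht by (simp_all add: prepend_Cons0 shift_prepend)
    then show ?thesis by (simp add: F_root)
  qed
  have s2: "(F ^^ (length u - 1)) (SOut [] (hd u), prepend (tl u) z) = (SOut (butlast u) (last u), z) \<and>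
    ncr F crs (SOut [] (hd u), prepend (tl u) z) (length u - 1) = 0"
    using descend[of "[]" u z] um un by simp
  have s3: "F (SOut (butlast u) (last u), z) = (MOut (butlast v), prepend [last v] z)"
    using F_leaf[OF i(1), of "butlast u" "last u" z] un by (simp add: u_def v_def)
  have s4: "(F ^^ length (butlast v)) (MOut (butlast v), prepend [last v] z) = cr (g y) \<and>
     ncr F crs (MOut (butlast v), prepend [last v] z) (length (butlast v)) = 0"
    using ascend[of "butlast v" "prepend [last v] z"] vn gy
    by (simp add: prepend_append[symmetric])
  define a where "a = length u - 1"
  define b where "b = length (butlast v)"
  have t1: "(F ^^ Suc a) (cr y) = (SOut (butlast u) (last u), z)"
    unfolding fps s1 using s2 by (simp add: a_def)
  have t2: "(F ^^ Suc b) (SOut (butlast u) (last u), z) = cr (g y)"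
    unfolding fps s3 using s4 by (simp add: b_def)
  have n1: "ncr F crs (cr y) (Suc a) = 1"
    unfolding ncr_Suc' s1 using s2 by (simp add: a_def crs_def)
  have n2: "ncr F crs (SOut (butlast u) (last u), z) (Suc b) = 0"
    unfolding ncr_Suc' s3 using s4 by (simp add: b_def crs_def)
  have "(F ^^ (Suc a + Suc b)) (cr y) = cr (g y)"
    unfolding fpa t1 t2 by simp
  moreover have "ncr F crs (cr y) (Suc a + Suc b) = 1"
    unfolding ncr_add t1 n1 n2 by simp
  ultimately show ?thesis by blast
qed

lemma g_inj: "inj g"
proof (rule injI)
  fix y y' assume e: "g y = g y'"
  obtain i where i: "i < N" "in_cone (leaves Tm ! i) y" using leaf_of by blast
  obtain j where j: "j < N" "in_cone (leaves Tm ! j) y'" using leaf_of by blast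
  have "leaves Tp ! \<sigma> i = leaves Tp ! \<sigma> j \<and> (\<lambda>k. y (k + length (leaves Tm ! i))) = (\<lambda>k. y' (k + length (leaves Tm ! j)))"
    using prepend_inj[of "leaves Tp ! \<sigma> i" Tp "leaves Tp ! \<sigma> j"] leafTp[OF i(1)] leafTp[OF j(1)] e g_eq[OF i] g_eq[OF j]
    by simp
  then have e1: "leaves Tp ! \<sigma> i = leaves Tp ! \<sigma> j" and e2: "(\<lambda>k. y (k + length (leaves Tm ! i))) = (\<lambda>k. y' (k + length (leaves Tm ! j)))"
    by auto
  have "\<sigma> i = \<sigma> j" using e1 sig[OF i(1)] sig[OF j(1)] len distinct_leaves[of Tp]
    using nth_eq_iff_index_eq by metis
  then have ij: "i = j" using sig_inj[OF i(1) j(1)] by simp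
  have "y = prepend (leaves Tm ! i) (\<lambda>k. y (k + length (leaves Tm ! i)))" using prepend_drop[of "leaves Tm ! i" y] i by simp
  also have "\<dots> = prepend (leaves Tm ! j) (\<lambda>k. y' (k + length (leaves Tm ! j)))" using e2 ij by simp
  also have "\<dots> = y'" using prepend_drop[of "leaves Tm ! j" y'] j by simp
  finally show "y = y'" .
qed

lemma reachS: "u \<in> inodes Tm \<Longrightarrow> \<exists>t. crs ((F ^^ t) (SOut u b, x))"
proof (induction "height Tm - length u" arbitrary: u b x rule: less_induct)
  case less
  show ?case
  proof (cases "u @ [b] \<in> inodes Tm")
    case True
    have "height Tm - length (u @ [b]) < height Tm - length u"
      using inode_len[OF True] by simp
    then obtain t where "crs ((F ^^ t) (SOut (u @ [b]) (x 0), shiftS x))" using less True by blast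
    then show ?thesis using F_int[OF True] by (metis fps)
  next
    case False
    then have m: "u @ [b] \<in> set (leaves Tm)" using child_leaf less.prems by blast
    then obtain i where i: "i < N" "leaves Tm ! i = u @ [b]" by (auto simp: in_set_conv_nth)
    have "crs ((F ^^ Suc (length (butlast (leaves Tp ! \<sigma> i)))) (SOut u b, x))"
      using F_leaf[OF i, of x] ascend[of "butlast (leaves Tp ! \<sigma> i)"] by (simp only: fps) (simp add: crs_def)
    then show ?thesis by blast
  qed
qed

lemma oports_D: "p \<in> oports D \<longleftrightarrow> (\<exists>u b. p = SOut u b \<and> u \<in> sS D) \<or> (\<exists>w. p = MOut w \<and> w \<in> sM D)"
  by (auto simp: oports_def)

lemma reach: "fst st \<in> oports DD \<Longrightarrow> \<exists>t. crs ((F ^^ t) st)"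
proof -
  assume "fst st \<in> oports DD"
  then consider u b where "fst st = SOut u b" "u \<in> inodes Tm" | w where "fst st = MOut w"
    by (auto simp: oports_D sS_DD sM_DD)
  then show ?thesis
  proof cases
    case 1 then show ?thesis using reachS[of u b "snd st"] by (metis prod.collapse)
  next
    case 2 then show ?thesis using ascend[of w "snd st"] by (metis crs_def fst_conv prod.collapse)
  qed
qed

end


lemma osrc_vtxs: "osrc p \<in> vtxs D \<longleftrightarrow> p \<in> oports D"
  by (cases p) (auto simp: vtxs_def oports_def)

lemma tp_up_inj: "tp_up w = tp_up w' \<Longrightarrow> w = w'"
proof -
  assume e: "tp_up w = tp_up w'"
  show "w = w'"
  proof (cases "w = []")
    case True then show ?thesis using e by (auto simp: tp_up_def split: if_splits)
  next
    case False
    then have w': "w' \<noteq> []" using e by (auto simp: tp_up_def split: if_splits)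
    then have "butlast w = butlast w'" "last w = last w'" using e False by (auto simp: tp_up_def)
    moreover have "w = butlast w @ [last w]" "w' = butlast w' @ [last w']" using False w' by simp_all
    ultimately show ?thesis by simp
  qed
qed

lemma ncr_le: "ncr F c s n \<le> n"
  by (induction n) auto

lemma funpow_comm_app: "(f ^^ a) ((f ^^ b) x) = (f ^^ b) ((f ^^ a) x)"
  using fpa[where F=f and a=b and b=a and s=x] fpa[where F=f and a=a and b=b and s=x] by (simp add: add.commute)

context VS begin

definition wf :: "sdiag \<Rightarrow> bool" where
  "wf D \<longleftrightarrow> (\<forall>p\<in>oports D. idst (stg D p) \<in> vtxs D) \<and> inj_on (stg D) (oports D) \<and>
     finite (sS D) \<and> finite (sM D) \<and> card (sS D) = card (sM D) \<and> sS D \<subseteq> inodes Tm \<and> sM D \<subseteq> inodes Tp"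

definition visit :: "sdiag \<Rightarrow> oport \<times> (nat \<Rightarrow> bool) \<Rightarrow> bool" where
  "visit D st \<longleftrightarrow> fst st \<in> oports D"

definition semI :: "sdiag \<Rightarrow> bool" where
  "semI D \<longleftrightarrow> (\<forall>p\<in>oports D. \<forall>x. \<exists>n>0. (F ^^ n) (p, x) = stepG D (p, x) \<and>
     (\<forall>i. 0 < i \<and> i < n \<longrightarrow> \<not> visit D ((F ^^ i) (p, x))) \<and> ncr F crs (p, x) n = slb D p)"

definition loopI :: "sdiag \<Rightarrow> bool" where
  "loopI D \<longleftrightarrow> (\<forall>l \<in># sloops D. \<exists>st Q. fst st \<in> oports DD \<and> cyc F crs st Q l)"

definition covI :: "sdiag \<Rightarrow> bool" where
  "covI D \<longleftrightarrow> (\<forall>y. \<exists>t. fst ((F ^^ t) (cr y)) \<in> oports D \<or> (\<exists>l\<in>#sloops D. \<exists>Q. cyc F crs ((F ^^ t) (cr y)) Q l))"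

definition Inv :: "sdiag \<Rightarrow> bool" where
  "Inv D \<longleftrightarrow> wf D \<and> semI D \<and> loopI D \<and> covI D"

lemma step_valid: "wf D \<Longrightarrow> fst st \<in> oports D \<Longrightarrow> fst (stepG D st) \<in> oports D"
proof -
  assume a: "wf D" "fst st \<in> oports D"
  then have "idst (stg D (fst st)) \<in> vtxs D" by (simp add: wf_def)
  then show ?thesis by (cases "stg D (fst st)") (auto simp: stepG_def vtxs_def oports_def)
qed

lemma steps_valid: "wf D \<Longrightarrow> fst st \<in> oports D \<Longrightarrow> fst ((stepG D ^^ j) st) \<in> oports D"
  by (induction j) (auto simp: step_valid)

lemma oports_mono: "sS D \<subseteq> sS D' \<Longrightarrow> sM D \<subseteq> sM D' \<Longrightarrow> oports D \<subseteq> oports D'"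
  by (auto simp: oports_def)

lemma wf_valid: "wf D \<Longrightarrow> p \<in> oports D \<Longrightarrow> p \<in> oports DD"
  using oports_mono[of D DD] by (auto simp: wf_def sS_DD sM_DD)

subsection \<open>D0 satisfies the invariant\<close>

lemma stgS_cases: "u \<in> inodes Tm \<Longrightarrow>
  (u @ [b] \<in> inodes Tm \<and> stg DD (SOut u b) = SIn (u @ [b])) \<or>
  (\<exists>i<N. leaves Tm ! i = u @ [b] \<and> u @ [b] \<notin> inodes Tm \<and> stg DD (SOut u b) = tp_up (leaves Tp ! \<sigma> i))"
proof (cases "u @ [b] \<in> inodes Tm")
  case True then show ?thesis by (simp add: stg_S)
next
  case False
  assume u: "u \<in> inodes Tm"
  then have "u @ [b] \<in> set (leaves Tm)" using child_leaf False by blast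
  then obtain i where "i < N" "leaves Tm ! i = u @ [b]" "(THE i. i < N \<and> leaves Tm ! i = u @ [b]) = i"
    using leaf_idx by blast
  then show ?thesis using False by (auto simp: stg_S)
qed

lemma stgS_cases': "u \<in> inodes Tm \<Longrightarrow>
  stg DD (SOut u b) = SIn (u @ [b]) \<or>
  (\<exists>i<N. leaves Tm ! i = u @ [b] \<and> stg DD (SOut u b) = tp_up (leaves Tp ! \<sigma> i))"
proof (cases "u @ [b] \<in> inodes Tm")
  case True then show ?thesis by (simp add: stg_S)
next
  case False
  assume u: "u \<in> inodes Tm"
  then have "u @ [b] \<in> set (leaves Tm)" using child_leaf False by blast
  then obtain i where "i < N" "leaves Tm ! i = u @ [b]" "(THE i. i < N \<and> leaves Tm ! i = u @ [b]) = i"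
    using leaf_idx by blast
  then show ?thesis using False by (auto simp: stg_S)
qed

lemma tp_up_leaf: "i < N \<Longrightarrow> tp_up (leaves Tp ! \<sigma> i) = MIn (butlast (leaves Tp ! \<sigma> i)) (last (leaves Tp ! \<sigma> i))"
  using leafTp by (simp add: tp_up_def)

lemma wf_DD: "wf DD"
proof -
  have w1: "idst (stg DD p) \<in> vtxs DD" if p: "p \<in> oports DD" for p
  proof -
    from p consider u b where "p = SOut u b" "u \<in> inodes Tm" | w where "p = MOut w" "w \<in> inodes Tp"
      by (auto simp: oports_D sS_DD sM_DD)
    then show ?thesis
    proof cases
      case 1
      from stgS_cases[OF 1(2), of b] show ?thesis
      proof
        assume "u @ [b] \<in> inodes Tm \<and> stg DD (SOut u b) = SIn (u @ [b])"
        then show ?thesis using 1 by (auto simp: vtxs_def sS_DD)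
      next
        assume "\<exists>i<N. leaves Tm ! i = u @ [b] \<and> u @ [b] \<notin> inodes Tm \<and> stg DD (SOut u b) = tp_up (leaves Tp ! \<sigma> i)"
        then obtain i where i: "i < N" "stg DD (SOut u b) = tp_up (leaves Tp ! \<sigma> i)" by blast
        then show ?thesis using 1 tp_up_leaf[OF i(1)] leafTp[OF i(1)] leaf_butlast
          by (auto simp: vtxs_def sM_DD)
      qed
    next
      case 2 then show ?thesis using root_inode[OF ntm] inode_butlast[of w Tp]
        by (auto simp: vtxs_def sM_DD sS_DD stg_M tp_up_def)
    qed
  qed
  have tS: "x = []" if "tp_up v = SIn x" for v x using that by (simp add: tp_up_def split: if_splits)
  have A: "SOut u b = SOut u' b'" if hA: "u \<in> inodes Tm" "u' \<in> inodes Tm" "stg DD (SOut u b) = stg DD (SOut u' b')" for u b u' b'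
  proof -
    from stgS_cases'[OF hA(1), of b] show ?thesis
    proof
      assume a1: "stg DD (SOut u b) = SIn (u @ [b])"
      from stgS_cases'[OF hA(2), of b'] show ?thesis
      proof
        assume a2: "stg DD (SOut u' b') = SIn (u' @ [b'])"
        show ?thesis using hA(3) a1 a2 by simp
      next
        assume "\<exists>j<N. leaves Tm ! j = u' @ [b'] \<and> stg DD (SOut u' b') = tp_up (leaves Tp ! \<sigma> j)"
        then obtain j where "stg DD (SOut u' b') = tp_up (leaves Tp ! \<sigma> j)" by blast
        then show ?thesis using hA(3) a1 tS[of "leaves Tp ! \<sigma> j" "u @ [b]"] by simp
      qed
    next
      assume "\<exists>i<N. leaves Tm ! i = u @ [b] \<and> stg DD (SOut u b) = tp_up (leaves Tp ! \<sigma> i)"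
      then obtain i where i: "i < N" "leaves Tm ! i = u @ [b]" "stg DD (SOut u b) = tp_up (leaves Tp ! \<sigma> i)" by blast
      from stgS_cases'[OF hA(2), of b'] show ?thesis
      proof
        assume a2: "stg DD (SOut u' b') = SIn (u' @ [b'])"
        show ?thesis using hA(3) i a2 tS[of "leaves Tp ! \<sigma> i" "u' @ [b']"] by simp
      next
        assume "\<exists>j<N. leaves Tm ! j = u' @ [b'] \<and> stg DD (SOut u' b') = tp_up (leaves Tp ! \<sigma> j)"
        then obtain j where j: "j < N" "leaves Tm ! j = u' @ [b']" "stg DD (SOut u' b') = tp_up (leaves Tp ! \<sigma> j)" by blast
        have "leaves Tp ! \<sigma> i = leaves Tp ! \<sigma> j" using i(3) j(3) hA(3) tp_up_inj by simp
        then have "\<sigma> i = \<sigma> j" using nth_eq_iff_index_eq[OF distinct_leaves[of Tp], of "\<sigma> i" "\<sigma> j"] sig[OF i(1)] sig[OF j(1)] len by simp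
        then have "i = j" using sig_inj i(1) j(1) by blast
        then show ?thesis using i(2) j(2) by simp
      qed
    qed
  qed
  have B: False if hB: "u \<in> inodes Tm" "w \<in> inodes Tp" "stg DD (SOut u b) = stg DD (MOut w)" for u b w
  proof -
    from stgS_cases'[OF hB(1), of b] show False
    proof
      assume "stg DD (SOut u b) = SIn (u @ [b])"
      then show False using hB(3) tS[of w "u @ [b]"] by (simp add: stg_M)
    next
      assume "\<exists>i<N. leaves Tm ! i = u @ [b] \<and> stg DD (SOut u b) = tp_up (leaves Tp ! \<sigma> i)"
      then obtain i where i: "i < N" "stg DD (SOut u b) = tp_up (leaves Tp ! \<sigma> i)" by blast
      then have "leaves Tp ! \<sigma> i = w" using hB(3) tp_up_inj by (simp add: stg_M)
      then show False using leafTp[OF i(1)] leaves_inodes_disj hB(2) by blast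
    qed
  qed
  have w2: "inj_on (stg DD) (oports DD)"
  proof (rule inj_onI)
    fix p q assume p: "p \<in> oports DD" and q: "q \<in> oports DD" and e: "stg DD p = stg DD q"
    from p consider u b where "p = SOut u b" "u \<in> inodes Tm" | w where "p = MOut w" "w \<in> inodes Tp"
      by (auto simp: oports_D sS_DD sM_DD)
    then show "p = q"
    proof cases
      case 1
      from q consider u' b' where "q = SOut u' b'" "u' \<in> inodes Tm" | w' where "q = MOut w'" "w' \<in> inodes Tp"
        by (auto simp: oports_D sS_DD sM_DD)
      then show ?thesis
      proof cases
        case 1 then show ?thesis using A \<open>p = SOut u b\<close> \<open>u \<in> inodes Tm\<close> e by blast
      next
        case 2 then show ?thesis using B \<open>p = SOut u b\<close> \<open>u \<in> inodes Tm\<close> e by blast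
      qed
    next
      case 2
      from q consider u' b' where "q = SOut u' b'" "u' \<in> inodes Tm" | w' where "q = MOut w'" "w' \<in> inodes Tp"
        by (auto simp: oports_D sS_DD sM_DD)
      then show ?thesis
      proof cases
        case 1 then show ?thesis using B[of u' w b'] \<open>p = MOut w\<close> \<open>w \<in> inodes Tp\<close> e by simp
      next
        case 2 then show ?thesis using \<open>p = MOut w\<close> e tp_up_inj by (simp add: stg_M)
      qed
    qed
  qed
  have c: "card (sS DD) = card (sM DD)" using card_inodes[of Tm] card_inodes[of Tp] len by (simp add: sS_DD sM_DD)
  show ?thesis using w1 w2 c by (simp add: wf_def sS_DD sM_DD finite_inodes)
qed

lemma Inv_DD: "Inv DD"
proof -
  have "semI DD"
    unfolding semI_def
  proof (intro ballI allI)
    fix p x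
    show "\<exists>n>0. (F ^^ n) (p, x) = stepG DD (p, x) \<and> (\<forall>i. 0 < i \<and> i < n \<longrightarrow> \<not> visit DD ((F ^^ i) (p, x))) \<and>
       ncr F crs (p, x) n = slb DD p"
      by (intro exI[of _ 1]) (simp add: F_def ncr_one crs_def slb_DD)
  qed
  moreover have "loopI DD" by (simp add: loopI_def loops_DD)
  moreover have "covI DD" unfolding covI_def
    by (intro allI exI[of _ 0]) (simp add: oports_D sM_DD root_inode[OF ntp])
  ultimately show ?thesis using wf_DD by (simp add: Inv_def)
qed

subsection \<open>Timing of diagram steps\<close>

definition nD :: "sdiag \<Rightarrow> oport \<times> (nat \<Rightarrow> bool) \<Rightarrow> nat" where
  "nD D st = (LEAST n. 0 < n \<and> visit D ((F ^^ n) st))"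

lemma nD_prop:
  assumes "wf D" "semI D" "fst st \<in> oports D"
  shows "0 < nD D st \<and> (F ^^ nD D st) st = stepG D st \<and> (\<forall>i. 0 < i \<and> i < nD D st \<longrightarrow> \<not> visit D ((F ^^ i) st)) \<and>
    ncr F crs st (nD D st) = slb D (fst st)"
proof -
  obtain p x where st: "st = (p, x)" by (cases st)
  obtain n where n: "0 < n" "(F ^^ n) (p, x) = stepG D (p, x)" "\<forall>i. 0 < i \<and> i < n \<longrightarrow> \<not> visit D ((F ^^ i) (p, x))"
    "ncr F crs (p, x) n = slb D p"
  proof -
    have pD: "p \<in> oports D" using assms(3) st by simp
    have "\<forall>x. \<exists>n>0. (F ^^ n) (p, x) = stepG D (p, x) \<and> (\<forall>i. 0 < i \<and> i < n \<longrightarrow> \<not> visit D ((F ^^ i) (p, x))) \<and> ncr F crs (p, x) n = slb D p"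
      using assms(2) pD unfolding semI_def by (rule bspec)
    then have "\<exists>n>0. (F ^^ n) (p, x) = stepG D (p, x) \<and> (\<forall>i. 0 < i \<and> i < n \<longrightarrow> \<not> visit D ((F ^^ i) (p, x))) \<and> ncr F crs (p, x) n = slb D p"
      by (rule spec)
    then show ?thesis using that by blast
  qed
  have v: "visit D ((F ^^ n) st)" using n(2) step_valid[OF assms(1,3)] st by (simp add: visit_def)
  have "nD D st = n" unfolding nD_def
  proof (rule Least_equality)
    show "0 < n \<and> visit D ((F ^^ n) st)" using n v by simp
  next
    fix m assume "0 < m \<and> visit D ((F ^^ m) st)"
    then show "n \<le> m" using n(3) st by (meson not_le)
  qed
  then show ?thesis using n st by simp
qed

definition dT :: "sdiag \<Rightarrow> oport \<times> (nat \<Rightarrow> bool) \<Rightarrow> nat \<Rightarrow> nat" where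
  "dT D st j = (\<Sum>i<j. nD D ((stepG D ^^ i) st))"

lemma dT_Suc: "dT D st (Suc j) = nD D st + dT D (stepG D st) j"
  unfolding dT_def sum.lessThan_Suc_shift by (simp add: funpow_Suc_right del: funpow.simps)

lemma dT_prop:
  assumes "wf D" "semI D" "fst st \<in> oports D"
  shows "(F ^^ dT D st j) st = (stepG D ^^ j) st \<and> ncr F crs st (dT D st j) = (\<Sum>i<j. slb D (fst ((stepG D ^^ i) st)))"
proof (induction j)
  case 0 then show ?case by (simp add: dT_def)
next
  case (Suc j)
  have v: "fst ((stepG D ^^ j) st) \<in> oports D" using steps_valid assms by blast
  have d: "dT D st (Suc j) = dT D st j + nD D ((stepG D ^^ j) st)" by (simp add: dT_def)
  show ?case using Suc nD_prop[OF assms(1,2) v] unfolding d by (simp add: fpa ncr_add)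
qed

lemma dT_mono: "wf D \<Longrightarrow> semI D \<Longrightarrow> fst st \<in> oports D \<Longrightarrow> j < j' \<Longrightarrow> dT D st j < dT D st j'"
proof (induction j')
  case (Suc j')
  have v: "fst ((stepG D ^^ j') st) \<in> oports D" using steps_valid Suc.prems by blast
  have "dT D st (Suc j') = dT D st j' + nD D ((stepG D ^^ j') st)" by (simp add: dT_def)
  then show ?case using Suc nD_prop[OF Suc.prems(1,2) v] by (cases "j = j'") auto
qed simp

lemma dT_mono': "wf D \<Longrightarrow> semI D \<Longrightarrow> fst st \<in> oports D \<Longrightarrow> dT D st j < dT D st j' \<Longrightarrow> j < j'"
proof -
  assume a: "wf D" "semI D" "fst st \<in> oports D" "dT D st j < dT D st j'"
  show "j < j'"
  proof (rule ccontr)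
    assume "\<not> j < j'"
    then have "j' = j \<or> j' < j" by linarith
    then show False using dT_mono[OF a(1,2,3), of j' j] a(4) by auto
  qed
qed

lemma visit_times:
  assumes "wf D" "semI D"
  shows "fst st \<in> oports D \<Longrightarrow> visit D ((F ^^ t) st) \<Longrightarrow> \<exists>j. t = dT D st j"
proof (induction t arbitrary: st rule: less_induct)
  case (less t)
  show ?case
  proof (cases "t = 0")
    case True then show ?thesis by (intro exI[of _ 0]) (simp add: dT_def)
  next
    case False
    note nd = nD_prop[OF assms less.prems(1)]
    have "\<not> t < nD D st" using nd False less.prems(2) by auto
    then have tt: "t = nD D st + (t - nD D st)" by simp
    have "(F ^^ t) st = (F ^^ (t - nD D st)) ((F ^^ nD D st) st)"
      using fpa[where F=F and a="nD D st" and b="t - nD D st" and s=st] tt by simp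
    then have "visit D ((F ^^ (t - nD D st)) (stepG D st))"
      using less.prems(2) nd by simp
    moreover have "t - nD D st < t" using nd False by simp
    ultimately obtain j where "t - nD D st = dT D (stepG D st) j"
      using less.IH step_valid[OF assms(1) less.prems(1)] by blast
    then have "t = dT D st (Suc j)" using tt dT_Suc[of D st j] by simp
    then show ?thesis by blast
  qed
qed

lemma dcycle:
  assumes "wf D" "semI D" "fst st \<in> oports D" "0 < k" "(stepG D ^^ k) st = st"
    "\<And>i. 0 < i \<Longrightarrow> i < k \<Longrightarrow> (stepG D ^^ i) st \<noteq> st"
  shows "cyc F crs st (dT D st k) (\<Sum>i<k. slb D (fst ((stepG D ^^ i) st)))"
proof -
  note dp = dT_prop[OF assms(1,2,3)]
  have Q: "0 < dT D st k" using dT_mono[OF assms(1,2,3) assms(4)] by (simp add: dT_def)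
  have m: "(F ^^ d) st \<noteq> st" if d: "0 < d" "d < dT D st k" for d
  proof
    assume e: "(F ^^ d) st = st"
    then have "visit D ((F ^^ d) st)" using assms(3) by (simp add: visit_def)
    then obtain j where j: "d = dT D st j" using visit_times[OF assms(1,2,3)] by blast
    have "j < k" using dT_mono'[OF assms(1,2,3)] j d by simp
    moreover have "0 < j" using j d by (cases j) (auto simp: dT_def)
    moreover have "(stepG D ^^ j) st = st" using dp[of j] j e by simp
    ultimately show False using assms(6) by blast
  qed
  show ?thesis using Q m dp[of k] assms(5) by (simp add: cyc_def)
qed

lemma dpath:
  assumes "wf D" "semI D" "fst st \<in> oports D" "0 < j" "vtxs D' \<subseteq> vtxs D"
    "\<And>i. 0 < i \<Longrightarrow> i < j \<Longrightarrow> fst ((stepG D ^^ i) st) \<notin> oports D'"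
  shows "\<exists>n>0. (F ^^ n) st = (stepG D ^^ j) st \<and> (\<forall>i. 0 < i \<and> i < n \<longrightarrow> \<not> visit D' ((F ^^ i) st)) \<and>
     ncr F crs st n = (\<Sum>i<j. slb D (fst ((stepG D ^^ i) st)))"
proof (intro exI conjI allI impI)
  note dp = dT_prop[OF assms(1,2,3)]
  show "0 < dT D st j" using dT_mono[OF assms(1,2,3) assms(4)] by (simp add: dT_def)
  show "(F ^^ dT D st j) st = (stepG D ^^ j) st" using dp by simp
  show "ncr F crs st (dT D st j) = (\<Sum>i<j. slb D (fst ((stepG D ^^ i) st)))" using dp by simp
  fix i assume i: "0 < i \<and> i < dT D st j"
  show "\<not> visit D' ((F ^^ i) st)"
  proof
    assume v': "visit D' ((F ^^ i) st)"
    then have "visit D ((F ^^ i) st)" using assms(5) osrc_vtxs[of "fst ((F ^^ i) st)" D'] osrc_vtxs[of "fst ((F ^^ i) st)" D] unfolding visit_def by blast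
    then obtain j' where j': "i = dT D st j'" using visit_times[OF assms(1,2,3)] by blast
    have "j' < j" using dT_mono'[OF assms(1,2,3)] j' i by simp
    moreover have "0 < j'" using j' i by (cases j') (auto simp: dT_def)
    ultimately show False using assms(6)[of j'] dp[of j'] j' v' by (simp add: visit_def)
  qed
qed

end


lemma stepG_SIn: "stg D p = SIn u \<Longrightarrow> stepG D (p, x) = (SOut u (x 0), shiftS x)"
  by (simp add: stepG_def)

lemma stepG_MIn: "stg D p = MIn w b \<Longrightarrow> stepG D (p, x) = (MOut w, prepend [b] x)"
  by (simp add: stepG_def)

lemma prepend1_0[simp]: "prepend [b] x 0 = b"
  by (simp add: prepend_def)

lemma shift_prepend1[simp]: "shiftS (prepend [b] x) = x"
  using shift_prepend[of b "[]" x] by simp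

lemma oports_r1: "oports (rule1_apply D m s) = oports D - {SOut s False, SOut s True, MOut m}"
  by (auto simp: oports_def rule1_apply_def)

lemma vtxs_r1: "vtxs (rule1_apply D m s) = vtxs D - {SV s, MV m}"
  by (auto simp: vtxs_def rule1_apply_def)

lemma stg_r1: "stg (rule1_apply D m s) p = fst (chase 3 (stg D) (slb D) m s p)"
  and slb_r1: "slb (rule1_apply D m s) p = snd (chase 3 (stg D) (slb D) m s p)"
  and sS_r1: "sS (rule1_apply D m s) = sS D - {s}"
  and sM_r1: "sM (rule1_apply D m s) = sM D - {m}"
  and loops_r1: "sloops (rule1_apply D m s) = sloops D + new_loops D m s"
  by (simp_all add: rule1_apply_def)

lemma chase3: "chase 3 t l m s p = (case t p of
        MIn w b \<Rightarrow> (if w = m then (let r = chase 2 t l m s (SOut s b) in (fst r, l p + l (MOut m) + snd r))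
                    else (t p, l p))
      | SIn u \<Rightarrow> (t p, l p))"
proof -
  have three: "(3::nat) = Suc 2" by simp
  show ?thesis by (subst three) (rule chase.simps(2))
qed

lemma chase2: "chase 2 t l m s p = (case t p of
        MIn w b \<Rightarrow> (if w = m then (let r = chase 1 t l m s (SOut s b) in (fst r, l p + l (MOut m) + snd r))
                    else (t p, l p))
      | SIn u \<Rightarrow> (t p, l p))"
proof -
  have two: "(2::nat) = Suc 1" by simp
  show ?thesis by (subst two) (rule chase.simps(2))
qed

lemma chase1: "(\<forall>c. t p \<noteq> MIn m c) \<Longrightarrow> chase 1 t l m s p = (t p, l p)"
  by (cases "t p") auto

lemma chase_nm: "(\<forall>c. t p \<noteq> MIn m c) \<Longrightarrow> chase 2 t l m s p = (t p, l p)"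
  by (cases "t p") (auto simp: chase2)

context VS begin

lemma chase_cases:
  assumes wf: "wf D" and m: "m \<in> sM D" and s: "s \<in> sS D" and e: "stg D (MOut m) = SIn s"
    and p: "p \<in> oports D" "p \<notin> {SOut s False, SOut s True, MOut m}"
  shows "((\<forall>b. stg D p \<noteq> MIn m b) \<and> chase 3 (stg D) (slb D) m s p = (stg D p, slb D p))
   \<or> (\<exists>b. stg D p = MIn m b \<and> (\<forall>c. stg D (SOut s b) \<noteq> MIn m c) \<and>
        chase 3 (stg D) (slb D) m s p = (stg D (SOut s b), slb D p + slb D (MOut m) + slb D (SOut s b)))
   \<or> (\<exists>b. stg D p = MIn m b \<and> stg D (SOut s b) = MIn m (\<not> b) \<and> (\<forall>c. stg D (SOut s (\<not> b)) \<noteq> MIn m c) \<and>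
        chase 3 (stg D) (slb D) m s p = (stg D (SOut s (\<not> b)),
          slb D p + slb D (MOut m) + (slb D (SOut s b) + slb D (MOut m) + slb D (SOut s (\<not> b)))))"
proof -
  have inj: "inj_on (stg D) (oports D)" using wf by (simp add: wf_def)
  have sO: "SOut s c \<in> oports D" for c using s by (simp add: oports_def)
  show ?thesis
  proof (cases "\<exists>b. stg D p = MIn m b")
    case False
    then have "chase 3 (stg D) (slb D) m s p = (stg D p, slb D p)"
      by (cases "stg D p") (auto simp: chase3)
    then show ?thesis using False by blast
  next
    case True
    then obtain b where b: "stg D p = MIn m b" by blast
    have nb: "stg D (SOut s b) \<noteq> MIn m b"
      using inj_onD[OF inj, of p "SOut s b"] b p sO by auto
    show ?thesis
    proof (cases "\<exists>c. stg D (SOut s b) = MIn m c")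
      case False
      have "chase 3 (stg D) (slb D) m s p = (stg D (SOut s b), slb D p + slb D (MOut m) + slb D (SOut s b))"
        using b False chase_nm[of "stg D" "SOut s b" m "slb D" s] by (simp add: chase3)
      then show ?thesis using b False by blast
    next
      case True
      then have c: "stg D (SOut s b) = MIn m (\<not> b)" using nb by (cases b) auto
      have n1: "stg D (SOut s (\<not> b)) \<noteq> MIn m b"
        using inj_onD[OF inj, of p "SOut s (\<not> b)"] b p sO by auto
      have n2: "stg D (SOut s (\<not> b)) \<noteq> MIn m (\<not> b)"
        using inj_onD[OF inj, of "SOut s b" "SOut s (\<not> b)"] c sO by auto
      have nn: "\<forall>c. stg D (SOut s (\<not> b)) \<noteq> MIn m c" 
      proof
        fix c show "stg D (SOut s (\<not> b)) \<noteq> MIn m c" using n1 n2 by (cases c; cases b) auto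
      qed
      have "chase 3 (stg D) (slb D) m s p = (stg D (SOut s (\<not> b)),
          slb D p + slb D (MOut m) + (slb D (SOut s b) + slb D (MOut m) + slb D (SOut s (\<not> b))))"
        using b c nn chase1[where t="stg D" and p="SOut s (\<not> b)" and m=m and s=s and l="slb D"] by (simp add: chase3 chase2)
      then show ?thesis using b c nn by blast
    qed
  qed
qed

lemma osrc_step: "osrc (fst (stepG D st)) = idst (stg D (fst st))"
  by (cases "stg D (fst st)") (auto simp: stepG_def)

lemma exit_ok:
  assumes wf: "wf D" and m: "m \<in> sM D" and e: "stg D (MOut m) = SIn s"
    and q: "q \<in> oports D" "q \<noteq> MOut m" "\<forall>c. stg D q \<noteq> MIn m c"
  shows "idst (stg D q) \<in> vtxs (rule1_apply D m s)" "fst (stepG D (q, x)) \<in> oports (rule1_apply D m s)"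
proof -
  have inj: "inj_on (stg D) (oports D)" using wf by (simp add: wf_def)
  have mO: "MOut m \<in> oports D" using m by (simp add: oports_def)
  have "stg D q \<noteq> SIn s" using inj_onD[OF inj, of q "MOut m"] q mO e by auto
  then have "idst (stg D q) \<noteq> SV s" by (cases "stg D q") auto
  moreover have "idst (stg D q) \<noteq> MV m" using q(3) by (cases "stg D q") auto
  moreover have "idst (stg D q) \<in> vtxs D" using wf q(1) by (simp add: wf_def)
  ultimately show i: "idst (stg D q) \<in> vtxs (rule1_apply D m s)" by (simp add: vtxs_r1)
  show "fst (stepG D (q, x)) \<in> oports (rule1_apply D m s)"
    using i osrc_step[of D "(q, x)"] osrc_vtxs by (metis fst_conv)
qed

lemma wf_r1:
  assumes wf: "wf D" and m: "m \<in> sM D" and s: "s \<in> sS D" and e: "stg D (MOut m) = SIn s"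
  shows "wf (rule1_apply D m s)"
proof -
  let ?D' = "rule1_apply D m s"
  have inj: "inj_on (stg D) (oports D)" using wf by (simp add: wf_def)
  have sO: "SOut s c \<in> oports D" for c using s by (simp add: oports_def)
  have pp: "p \<in> oports D \<and> p \<notin> {SOut s False, SOut s True, MOut m}" if "p \<in> oports ?D'" for p
    using that by (simp add: oports_r1)
  have SnM: "SOut s c \<noteq> MOut m" for c by simp
  have w1: "idst (stg ?D' p) \<in> vtxs ?D'" if p: "p \<in> oports ?D'" for p
  proof -
    note pc = pp[OF p]
    from chase_cases[OF wf m s e conjunct1[OF pc] conjunct2[OF pc]] show ?thesis
    proof (elim disjE exE conjE)
      assume "\<forall>b. stg D p \<noteq> MIn m b" "chase 3 (stg D) (slb D) m s p = (stg D p, slb D p)"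
      then show ?thesis using exit_ok(1)[OF wf m e, of p] pc by (simp add: stg_r1)
    next
      fix b assume "stg D p = MIn m b" "\<forall>c. stg D (SOut s b) \<noteq> MIn m c"
        "chase 3 (stg D) (slb D) m s p = (stg D (SOut s b), slb D p + slb D (MOut m) + slb D (SOut s b))"
      then show ?thesis using exit_ok(1)[OF wf m e sO SnM] by (simp add: stg_r1)
    next
      fix b assume "stg D p = MIn m b" "stg D (SOut s b) = MIn m (\<not> b)" "\<forall>c. stg D (SOut s (\<not> b)) \<noteq> MIn m c"
        "chase 3 (stg D) (slb D) m s p = (stg D (SOut s (\<not> b)),
          slb D p + slb D (MOut m) + (slb D (SOut s b) + slb D (MOut m) + slb D (SOut s (\<not> b))))"
      then show ?thesis using exit_ok(1)[OF wf m e sO SnM] by (simp add: stg_r1)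
    qed
  qed
  have ex: "\<exists>q. stg ?D' p = stg D q \<and> ((\<forall>b. stg D p \<noteq> MIn m b) \<and> q = p
     \<or> (\<exists>b. stg D p = MIn m b \<and> q = SOut s b)
     \<or> (\<exists>b. stg D p = MIn m b \<and> stg D (SOut s b) = MIn m (\<not> b) \<and> q = SOut s (\<not> b)))"
    if p: "p \<in> oports ?D'" for p
  proof -
    note pc = pp[OF p]
    from chase_cases[OF wf m s e conjunct1[OF pc] conjunct2[OF pc]] show ?thesis
      by (elim disjE exE conjE) (simp_all add: stg_r1, blast+)
  qed
  have w2: "inj_on (stg ?D') (oports ?D')"
  proof (rule inj_onI)
    fix p1 p2 assume p1: "p1 \<in> oports ?D'" and p2: "p2 \<in> oports ?D'" and eq: "stg ?D' p1 = stg ?D' p2"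
    note c1 = pp[OF p1] and c2 = pp[OF p2]
    obtain q1 where q1: "stg ?D' p1 = stg D q1" "(\<forall>b. stg D p1 \<noteq> MIn m b) \<and> q1 = p1
     \<or> (\<exists>b. stg D p1 = MIn m b \<and> q1 = SOut s b)
     \<or> (\<exists>b. stg D p1 = MIn m b \<and> stg D (SOut s b) = MIn m (\<not> b) \<and> q1 = SOut s (\<not> b))"
      using ex[OF p1] by blast
    obtain q2 where q2: "stg ?D' p2 = stg D q2" "(\<forall>b. stg D p2 \<noteq> MIn m b) \<and> q2 = p2
     \<or> (\<exists>b. stg D p2 = MIn m b \<and> q2 = SOut s b)
     \<or> (\<exists>b. stg D p2 = MIn m b \<and> stg D (SOut s b) = MIn m (\<not> b) \<and> q2 = SOut s (\<not> b))"
      using ex[OF p2] by blast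
    have q1O: "q1 \<in> oports D" using q1(2) c1 sO by blast
    have q2O: "q2 \<in> oports D" using q2(2) c2 sO by blast
    have qq: "q1 = q2" using inj_onD[OF inj, of q1 q2] q1(1) q2(1) eq q1O q2O by simp
    have I: "a = b'" if "a \<in> oports D" "b' \<in> oports D" "stg D a = stg D b'" for a b'
      using inj_onD[OF inj] that by blast
    show "p1 = p2"
      using q1(2)
    proof (elim disjE exE conjE)
      assume a1: "\<forall>b. stg D p1 \<noteq> MIn m b" "q1 = p1"
      then show ?thesis using q2(2) qq c1 by auto
    next
      fix b1 assume a1: "stg D p1 = MIn m b1" "q1 = SOut s b1"
      from q2(2) show ?thesis
      proof (elim disjE exE conjE)
        assume "\<forall>b. stg D p2 \<noteq> MIn m b" "q2 = p2" then show ?thesis using qq a1 c2 by auto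
      next
        fix b2 assume "stg D p2 = MIn m b2" "q2 = SOut s b2"
        then show ?thesis using qq a1 I[of p1 p2] c1 c2 by auto
      next
        fix b2 assume a2: "stg D p2 = MIn m b2" "stg D (SOut s b2) = MIn m (\<not> b2)" "q2 = SOut s (\<not> b2)"
        then have "b1 = (\<not> b2)" using qq a1 by simp
        then have "stg D p1 = stg D (SOut s b2)" using a1 a2 by simp
        then have "p1 = SOut s b2" using I[of p1 "SOut s b2"] c1 sO by blast
        then show ?thesis using c1 by (cases b2) auto
      qed
    next
      fix b1 assume a1: "stg D p1 = MIn m b1" "stg D (SOut s b1) = MIn m (\<not> b1)" "q1 = SOut s (\<not> b1)"
      from q2(2) show ?thesis
      proof (elim disjE exE conjE)
        assume "\<forall>b. stg D p2 \<noteq> MIn m b" "q2 = p2" then show ?thesis using qq a1 c2 by auto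
      next
        fix b2 assume a2: "stg D p2 = MIn m b2" "q2 = SOut s b2"
        then have "b2 = (\<not> b1)" using qq a1 by simp
        then have "stg D p2 = stg D (SOut s b1)" using a1 a2 by simp
        then have "p2 = SOut s b1" using I[of p2 "SOut s b1"] c2 sO by blast
        then show ?thesis using c2 by (cases b1) auto
      next
        fix b2 assume a2: "stg D p2 = MIn m b2" "stg D (SOut s b2) = MIn m (\<not> b2)" "q2 = SOut s (\<not> b2)"
        then have "b1 = b2" using qq a1 by simp
        then show ?thesis using a1 a2 I[of p1 p2] c1 c2 by auto
      qed
    qed
  qed
  have fin: "finite (sS D)" "finite (sM D)" "card (sS D) = card (sM D)" "sS D \<subseteq> inodes Tm" "sM D \<subseteq> inodes Tp"
    using wf by (auto simp: wf_def)
  have "card (sS D - {s}) = card (sM D - {m})" using fin s m by simp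
  then show ?thesis using w1 w2 fin by (auto simp: wf_def sS_r1 sM_r1)
qed

end


lemma less3: "0 < (i::nat) \<Longrightarrow> i < 3 \<Longrightarrow> i = 1 \<or> i = 2" by arith
lemma less5: "0 < (i::nat) \<Longrightarrow> i < 5 \<Longrightarrow> i = 1 \<or> i = 2 \<or> i = 3 \<or> i = 4" by arith
lemma less2: "0 < (i::nat) \<Longrightarrow> i < 2 \<Longrightarrow> i = 1" by arith
lemma less4: "0 < (i::nat) \<Longrightarrow> i < 4 \<Longrightarrow> i = 1 \<or> i = 2 \<or> i = 3" by arith

lemma fp1: "((f::'a \<Rightarrow> 'a) ^^ 1) x = f x" by (simp only: One_nat_def funpow_simps_right comp_apply id_apply)
lemma fp2: "((f::'a \<Rightarrow> 'a) ^^ 2) x = f (f x)" by (simp only: numeral_2_eq_2 funpow_simps_right comp_apply id_apply)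
lemma fp3: "((f::'a \<Rightarrow> 'a) ^^ 3) x = f (f (f x))" by (simp only: numeral_3_eq_3 funpow_simps_right comp_apply id_apply)
lemma fp4: "((f::'a \<Rightarrow> 'a) ^^ 4) x = f (f (f (f x)))"
proof - have "(4::nat) = Suc (Suc (Suc (Suc 0)))" by simp
  then show ?thesis by (simp only: funpow_simps_right comp_apply id_apply) qed
lemma fp5: "((f::'a \<Rightarrow> 'a) ^^ 5) x = f (f (f (f (f x))))"
proof - have "(5::nat) = Suc (Suc (Suc (Suc (Suc 0))))" by simp
  then show ?thesis by (simp only: funpow_simps_right comp_apply id_apply) qed
lemma sum2: "(\<Sum>i<2. g i) = g 0 + g (1::nat)" for g :: "nat \<Rightarrow> nat" by (simp add: numeral_2_eq_2)
lemma sum3: "(\<Sum>i<3. g i) = g 0 + g 1 + g (2::nat)" for g :: "nat \<Rightarrow> nat" by (simp add: eval_nat_numeral)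
lemma sum4: "(\<Sum>i<4. g i) = g 0 + g 1 + g 2 + g (3::nat)" for g :: "nat \<Rightarrow> nat" by (simp add: eval_nat_numeral)
lemma sum5: "(\<Sum>i<5. g i) = g 0 + g 1 + g 2 + g 3 + g (4::nat)" for g :: "nat \<Rightarrow> nat" by (simp add: eval_nat_numeral)

lemma stepG_same: "stg D p = stg D' q \<Longrightarrow> stepG D (p, x) = stepG D' (q, x)"
  by (simp add: stepG_def split: iport.split)

context VS begin

lemma semI_r1:
  assumes wf: "wf D" and sem: "semI D" and m: "m \<in> sM D" and s: "s \<in> sS D" and e: "stg D (MOut m) = SIn s"
  shows "semI (rule1_apply D m s)"
  unfolding semI_def
proof (intro ballI allI)
  let ?D' = "rule1_apply D m s"
  fix p x assume p: "p \<in> oports ?D'"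
  have pc: "p \<in> oports D" "p \<notin> {SOut s False, SOut s True, MOut m}" using p by (simp_all add: oports_r1)
  have sub: "vtxs ?D' \<subseteq> vtxs D" by (auto simp: vtxs_r1)
  have sO: "SOut s c \<notin> oports ?D'" for c by (simp add: oports_r1)
  have mO: "MOut m \<notin> oports ?D'" by (simp add: oports_r1)
  let ?G = "\<exists>n>0. (F ^^ n) (p, x) = stepG ?D' (p, x) \<and> (\<forall>i. 0 < i \<and> i < n \<longrightarrow> \<not> visit ?D' ((F ^^ i) (p, x))) \<and>
       ncr F crs (p, x) n = slb ?D' p"
  from chase_cases[OF wf m s e pc] show ?G
  proof (elim disjE exE conjE)
    assume a: "\<forall>b. stg D p \<noteq> MIn m b" "chase 3 (stg D) (slb D) m s p = (stg D p, slb D p)"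
    have "stepG ?D' (p, x) = stepG D (p, x)" using a by (intro stepG_same) (simp add: stg_r1)
    then show ?G using dpath[OF wf sem _ _ sub, of "(p, x)" 1] pc a by (simp add: slb_r1)
  next
    fix b assume a: "stg D p = MIn m b" "\<forall>c. stg D (SOut s b) \<noteq> MIn m c"
      "chase 3 (stg D) (slb D) m s p = (stg D (SOut s b), slb D p + slb D (MOut m) + slb D (SOut s b))"
    have s1: "stepG D (p, x) = (MOut m, prepend [b] x)" using a by (simp add: stepG_MIn)
    have s2: "stepG D (MOut m, prepend [b] x) = (SOut s b, x)" using e by (simp add: stepG_SIn)
    have s3: "stepG D (SOut s b, x) = stepG ?D' (p, x)" using a by (intro stepG_same) (simp add: stg_r1)
    have "(stepG D ^^ 3) (p, x) = stepG ?D' (p, x)" using s1 s2 s3 by (simp add: fp3)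
    moreover have "fst ((stepG D ^^ i) (p, x)) \<notin> oports ?D'" if "0 < i" "i < 3" for i
      using less3[OF that] s1 s2 sO mO by (auto simp: fp2)
    moreover have "(\<Sum>i<3. slb D (fst ((stepG D ^^ i) (p, x)))) = slb ?D' p"
      using s1 s2 a by (simp add: sum3 fp2 slb_r1)
    ultimately show ?G using dpath[OF wf sem _ _ sub, of "(p, x)" 3] pc by simp
  next
    fix b assume a: "stg D p = MIn m b" "stg D (SOut s b) = MIn m (\<not> b)" "\<forall>c. stg D (SOut s (\<not> b)) \<noteq> MIn m c"
      "chase 3 (stg D) (slb D) m s p = (stg D (SOut s (\<not> b)),
          slb D p + slb D (MOut m) + (slb D (SOut s b) + slb D (MOut m) + slb D (SOut s (\<not> b))))"
    have s1: "stepG D (p, x) = (MOut m, prepend [b] x)" using a by (simp add: stepG_MIn)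
    have s2: "stepG D (MOut m, prepend [b] x) = (SOut s b, x)" using e by (simp add: stepG_SIn)
    have s3: "stepG D (SOut s b, x) = (MOut m, prepend [\<not> b] x)" using a by (simp add: stepG_MIn)
    have s4: "stepG D (MOut m, prepend [\<not> b] x) = (SOut s (\<not> b), x)" using e by (simp add: stepG_SIn)
    have s5: "stepG D (SOut s (\<not> b), x) = stepG ?D' (p, x)" using a by (intro stepG_same) (simp add: stg_r1)
    have "(stepG D ^^ 5) (p, x) = stepG ?D' (p, x)" using s1 s2 s3 s4 s5 by (simp add: fp5)
    moreover have "fst ((stepG D ^^ i) (p, x)) \<notin> oports ?D'" if "0 < i" "i < 5" for i
      using less5[OF that] s1 s2 s3 s4 sO mO by (auto simp: fp2 fp3 fp4)
    moreover have "(\<Sum>i<5. slb D (fst ((stepG D ^^ i) (p, x)))) = slb ?D' p"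
      using s1 s2 s3 s4 a by (simp add: sum5 fp2 fp3 fp4 slb_r1)
    ultimately show ?G using dpath[OF wf sem _ _ sub, of "(p, x)" 5] pc by simp
  qed
qed

lemma loop_b:
  assumes wf: "wf D" and sem: "semI D" and s: "s \<in> sS D" and e: "stg D (MOut m) = SIn s"
    and b: "stg D (SOut s b) = MIn m b"
  shows "\<exists>Q. cyc F crs (SOut s b, x) Q (slb D (SOut s b) + slb D (MOut m))"
proof -
  have sO: "SOut s b \<in> oports D" using s by (simp add: oports_def)
  have s1: "stepG D (SOut s b, x) = (MOut m, prepend [b] x)" using b by (simp add: stepG_MIn)
  have s2: "stepG D (MOut m, prepend [b] x) = (SOut s b, x)" using e by (simp add: stepG_SIn)
  have "cyc F crs (SOut s b, x) (dT D (SOut s b, x) 2) (\<Sum>i<2. slb D (fst ((stepG D ^^ i) (SOut s b, x))))"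
    by (rule dcycle[OF wf sem]) (use sO s1 s2 in \<open>auto simp: fp1 fp2 dest!: less2\<close>)
  then show ?thesis using s1 by (auto simp: sum2)
qed

lemma loop_3:
  assumes wf: "wf D" and sem: "semI D" and s: "s \<in> sS D" and e: "stg D (MOut m) = SIn s"
    and b: "stg D (SOut s b) = MIn m (\<not> b)" "stg D (SOut s (\<not> b)) = MIn m b"
  shows "\<exists>Q. cyc F crs (SOut s b, x) Q (slb D (SOut s False) + slb D (SOut s True) + 2 * slb D (MOut m))"
proof -
  have sO: "SOut s b \<in> oports D" using s by (simp add: oports_def)
  have s1: "stepG D (SOut s b, x) = (MOut m, prepend [\<not> b] x)" using b by (simp add: stepG_MIn)
  have s2: "stepG D (MOut m, prepend [\<not> b] x) = (SOut s (\<not> b), x)" using e by (simp add: stepG_SIn)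
  have s3: "stepG D (SOut s (\<not> b), x) = (MOut m, prepend [b] x)" using b by (simp add: stepG_MIn)
  have s4: "stepG D (MOut m, prepend [b] x) = (SOut s b, x)" using e by (simp add: stepG_SIn)
  have "cyc F crs (SOut s b, x) (dT D (SOut s b, x) 4) (\<Sum>i<4. slb D (fst ((stepG D ^^ i) (SOut s b, x))))"
    by (rule dcycle[OF wf sem]) (use sO s1 s2 s3 s4 in \<open>auto simp: fp1 fp2 fp3 fp4 dest!: less4\<close>)
  moreover have "(\<Sum>i<4. slb D (fst ((stepG D ^^ i) (SOut s b, x)))) = slb D (SOut s False) + slb D (SOut s True) + 2 * slb D (MOut m)"
    using s1 s2 s3 by (cases b) (simp_all add: sum4 fp2 fp3)
  ultimately show ?thesis by auto
qed

lemma new_loops_cases: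
  "l \<in># new_loops D m s \<Longrightarrow>
    (stg D (SOut s False) = MIn m False \<and> l = slb D (SOut s False) + slb D (MOut m)) \<or>
    (stg D (SOut s True) = MIn m True \<and> l = slb D (SOut s True) + slb D (MOut m)) \<or>
    (stg D (SOut s False) = MIn m True \<and> stg D (SOut s True) = MIn m False \<and>
       l = slb D (SOut s False) + slb D (SOut s True) + 2 * slb D (MOut m))"
  by (auto simp: new_loops_def Let_def split: if_splits)

lemma new_loops_b: "stg D (SOut s b) = MIn m b \<Longrightarrow> slb D (SOut s b) + slb D (MOut m) \<in># new_loops D m s"
  by (cases b) (auto simp: new_loops_def Let_def)

lemma new_loops_3: "stg D (SOut s b) = MIn m (\<not> b) \<Longrightarrow> stg D (SOut s (\<not> b)) = MIn m b \<Longrightarrow>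
   slb D (SOut s False) + slb D (SOut s True) + 2 * slb D (MOut m) \<in># new_loops D m s"
  by (cases b) (auto simp: new_loops_def Let_def)

lemma loopI_r1:
  assumes wf: "wf D" and sem: "semI D" and li: "loopI D" and s: "s \<in> sS D" and e: "stg D (MOut m) = SIn s"
  shows "loopI (rule1_apply D m s)"
  unfolding loopI_def
proof
  fix l assume l: "l \<in># sloops (rule1_apply D m s)"
  have v: "fst (SOut s c, x) \<in> oports DD" for c x using s wf by (auto simp: wf_def oports_def sS_DD)
  show "\<exists>st Q. fst st \<in> oports DD \<and> cyc F crs st Q l"
  proof (cases "l \<in># sloops D")
    case True then show ?thesis using li by (simp add: loopI_def)
  next
    case False
    then have "l \<in># new_loops D m s" using l by (simp add: loops_r1)
    from new_loops_cases[OF this] show ?thesis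
    proof (elim disjE conjE)
      assume a: "stg D (SOut s False) = MIn m False" "l = slb D (SOut s False) + slb D (MOut m)"
      obtain Q where "cyc F crs (SOut s False, \<lambda>_. False) Q l" using loop_b[OF wf sem s e a(1)] a(2) by blast
      then show ?thesis using v[of False "\<lambda>_. False"] by (intro exI[of _ "(SOut s False, \<lambda>_. False)"] exI[of _ Q]) simp
    next
      assume a: "stg D (SOut s True) = MIn m True" "l = slb D (SOut s True) + slb D (MOut m)"
      obtain Q where "cyc F crs (SOut s True, \<lambda>_. False) Q l" using loop_b[OF wf sem s e a(1)] a(2) by blast
      then show ?thesis using v[of True "\<lambda>_. False"] by (intro exI[of _ "(SOut s True, \<lambda>_. False)"] exI[of _ Q]) simp
    next
      assume a: "stg D (SOut s False) = MIn m True" "stg D (SOut s True) = MIn m False"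
        "l = slb D (SOut s False) + slb D (SOut s True) + 2 * slb D (MOut m)"
      obtain Q where "cyc F crs (SOut s False, \<lambda>_. False) Q l" using loop_3[OF wf sem s e, of False] a by auto
      then show ?thesis using v[of False "\<lambda>_. False"] by (intro exI[of _ "(SOut s False, \<lambda>_. False)"] exI[of _ Q]) simp
    qed
  qed
qed

lemma advS:
  assumes wf: "wf D" and sem: "semI D" and m: "m \<in> sM D" and s: "s \<in> sS D" and e: "stg D (MOut m) = SIn s"
  shows "\<exists>k. fst ((stepG D ^^ k) (SOut s b, x)) \<in> oports (rule1_apply D m s) \<or>
      (\<exists>l\<in>#new_loops D m s. \<exists>Q. cyc F crs ((stepG D ^^ k) (SOut s b, x)) Q l)"
proof -
  have inj: "inj_on (stg D) (oports D)" using wf by (simp add: wf_def)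
  have sO: "SOut s c \<in> oports D" for c using s by (simp add: oports_def)
  have SnM: "SOut s c \<noteq> MOut m" for c by simp
  show ?thesis
  proof (cases "\<exists>c. stg D (SOut s b) = MIn m c")
    case False
    then have "fst ((stepG D ^^ 1) (SOut s b, x)) \<in> oports (rule1_apply D m s)"
      using exit_ok(2)[OF wf m e sO SnM] by (simp add: fp1)
    then show ?thesis by blast
  next
    case True
    then obtain c where c: "stg D (SOut s b) = MIn m c" by blast
    show ?thesis
    proof (cases "c = b")
      case True
      then have cb: "stg D (SOut s b) = MIn m b" using c by simp
      obtain Q where "cyc F crs (SOut s b, x) Q (slb D (SOut s b) + slb D (MOut m))"
        using loop_b[OF wf sem s e cb] by blast
      then have "\<exists>l\<in>#new_loops D m s. \<exists>Q. cyc F crs ((stepG D ^^ 0) (SOut s b, x)) Q l"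
        using new_loops_b[OF cb] by auto
      then show ?thesis by blast
    next
      case False
      then have cb: "stg D (SOut s b) = MIn m (\<not> b)" using c by (cases b; cases c) auto
      have n2: "stg D (SOut s (\<not> b)) \<noteq> MIn m (\<not> b)"
        using inj_onD[OF inj, of "SOut s b" "SOut s (\<not> b)"] cb sO by auto
      show ?thesis
      proof (cases "stg D (SOut s (\<not> b)) = MIn m b")
        case True
        obtain Q where "cyc F crs (SOut s b, x) Q (slb D (SOut s False) + slb D (SOut s True) + 2 * slb D (MOut m))"
          using loop_3[OF wf sem s e cb True] by blast
        then have "\<exists>l\<in>#new_loops D m s. \<exists>Q. cyc F crs ((stepG D ^^ 0) (SOut s b, x)) Q l"
          using new_loops_3[OF cb True] by auto
        then show ?thesis by blast
      next
        case False
        have nn: "\<forall>c. stg D (SOut s (\<not> b)) \<noteq> MIn m c"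
        proof
          fix c show "stg D (SOut s (\<not> b)) \<noteq> MIn m c" using n2 False by (cases c; cases b) auto
        qed
        have s1: "stepG D (SOut s b, x) = (MOut m, prepend [\<not> b] x)" using cb by (simp add: stepG_MIn)
        have s2: "stepG D (MOut m, prepend [\<not> b] x) = (SOut s (\<not> b), x)" using e by (simp add: stepG_SIn)
        have "fst ((stepG D ^^ 3) (SOut s b, x)) \<in> oports (rule1_apply D m s)"
          using exit_ok(2)[OF wf m e sO SnM nn, of x] s1 s2 by (simp add: fp3)
        then show ?thesis by blast
      qed
    qed
  qed
qed

lemma advance:
  assumes wf: "wf D" and sem: "semI D" and m: "m \<in> sM D" and s: "s \<in> sS D" and e: "stg D (MOut m) = SIn s"
    and st: "fst st \<in> oports D"
  shows "\<exists>k. fst ((stepG D ^^ k) st) \<in> oports (rule1_apply D m s) \<or>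
      (\<exists>l\<in>#new_loops D m s. \<exists>Q. cyc F crs ((stepG D ^^ k) st) Q l)"
proof -
  obtain p x where px: "st = (p, x)" by (cases st)
  show ?thesis
  proof (cases "p \<in> oports (rule1_apply D m s)")
    case True
    then have "fst ((stepG D ^^ 0) st) \<in> oports (rule1_apply D m s)" using px by simp
    then show ?thesis by blast
  next
    case False
    then have "p \<in> {SOut s False, SOut s True, MOut m}" using st px by (simp add: oports_r1)
    then consider b where "p = SOut s b" | "p = MOut m" by blast
    then show ?thesis
    proof cases
      case 1 then show ?thesis using advS[OF wf sem m s e, of b x] px by simp
    next
      case 2
      have s1: "stepG D (MOut m, x) = (SOut s (x 0), shiftS x)" using e by (simp add: stepG_SIn)
      obtain k where k: "fst ((stepG D ^^ k) (SOut s (x 0), shiftS x)) \<in> oports (rule1_apply D m s) \<or>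
        (\<exists>l\<in>#new_loops D m s. \<exists>Q. cyc F crs ((stepG D ^^ k) (SOut s (x 0), shiftS x)) Q l)"
        using advS[OF wf sem m s e] by blast
      have "(stepG D ^^ Suc k) st = (stepG D ^^ k) (SOut s (x 0), shiftS x)"
        using s1 px 2 by (simp add: fps del: funpow.simps)
      then show ?thesis using k by metis
    qed
  qed
qed

lemma covI_r1:
  assumes wf: "wf D" and sem: "semI D" and ci: "covI D" and m: "m \<in> sM D" and s: "s \<in> sS D" and e: "stg D (MOut m) = SIn s"
  shows "covI (rule1_apply D m s)"
  unfolding covI_def
proof
  fix y
  let ?D' = "rule1_apply D m s"
  obtain t where t: "fst ((F ^^ t) (cr y)) \<in> oports D \<or> (\<exists>l\<in>#sloops D. \<exists>Q. cyc F crs ((F ^^ t) (cr y)) Q l)"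
    using spec[OF ci[unfolded covI_def], of y] by blast
  then show "\<exists>t. fst ((F ^^ t) (cr y)) \<in> oports ?D' \<or> (\<exists>l\<in>#sloops ?D'. \<exists>Q. cyc F crs ((F ^^ t) (cr y)) Q l)"
  proof
    assume "\<exists>l\<in>#sloops D. \<exists>Q. cyc F crs ((F ^^ t) (cr y)) Q l"
    then have "\<exists>l\<in>#sloops ?D'. \<exists>Q. cyc F crs ((F ^^ t) (cr y)) Q l" by (auto simp: loops_r1)
    then show ?thesis by blast
  next
    assume p: "fst ((F ^^ t) (cr y)) \<in> oports D"
    let ?st = "(F ^^ t) (cr y)"
    obtain k where k: "fst ((stepG D ^^ k) ?st) \<in> oports ?D' \<or>
      (\<exists>l\<in>#new_loops D m s. \<exists>Q. cyc F crs ((stepG D ^^ k) ?st) Q l)"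
      using advance[OF wf sem m s e p] by blast
    have "(F ^^ (t + dT D ?st k)) (cr y) = (stepG D ^^ k) ?st"
      using dT_prop[OF wf sem p, of k] by (simp add: fpa)
    then have "fst ((F ^^ (t + dT D ?st k)) (cr y)) \<in> oports ?D' \<or>
      (\<exists>l\<in>#sloops ?D'. \<exists>Q. cyc F crs ((F ^^ (t + dT D ?st k)) (cr y)) Q l)"
      using k by (auto simp: loops_r1)
    then show ?thesis by blast
  qed
qed

lemma Inv_step: "Inv D \<Longrightarrow> rule1_step D D' \<Longrightarrow> Inv D'"
proof -
  assume I: "Inv D" and r: "rule1_step D D'"
  then obtain m s where m: "m \<in> sM D" and s: "s \<in> sS D" and e: "stg D (MOut m) = SIn s" and D': "D' = rule1_apply D m s"
    by (auto simp: rule1_step_def)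
  have wf: "wf D" and sem: "semI D" and li: "loopI D" and ci: "covI D" using I by (auto simp: Inv_def)
  show ?thesis unfolding D' Inv_def
    using wf_r1[OF wf m s e] semI_r1[OF wf sem m s e] loopI_r1[OF wf sem li s e] covI_r1[OF wf sem ci m s e] by simp
qed

lemma Inv_reach: "rule1_step\<^sup>*\<^sup>* DD D \<Longrightarrow> Inv D"
  by (induction rule: rtranclp_induct) (auto simp: Inv_DD intro: Inv_step)

end


lemma per_dvd: "per g z l \<Longrightarrow> (g ^^ k) z = z \<Longrightarrow> l dvd k"
proof -
  assume p: "per g z l" and k: "(g ^^ k) z = z"
  have l: "0 < l" "(g ^^ l) z = z" "\<And>j. 0 < j \<Longrightarrow> j < l \<Longrightarrow> (g ^^ j) z \<noteq> z" using p by (auto simp: per_def)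
  have "(g ^^ k) z = (g ^^ (k mod l)) ((g ^^ (k div l * l)) z)"
    using fpa[where F=g and a="k div l * l" and b="k mod l" and s=z] by (simp add: add.commute)
  then have "(g ^^ (k mod l)) z = z" using k per_funpow[where F=g and Q=l and s=z, OF l(2)] by simp
  then have "k mod l = 0" using l(3)[of "k mod l"] l(1) by (meson mod_less_divisor neq0_conv)
  then show ?thesis by auto
qed

lemma periodic_point:
  assumes "finite A" "\<And>x. x \<in> A \<Longrightarrow> f x \<in> A" "a \<in> A"
  shows "\<exists>w\<in>A. \<exists>k. per f w k"
proof -
  have fA: "(f ^^ i) x \<in> A" if "x \<in> A" for i x using that assms(2) by (induction i) auto
  have "\<not> inj_on (\<lambda>i. (f ^^ i) a) {..card A}"
  proof
    assume "inj_on (\<lambda>i. (f ^^ i) a) {..card A}"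
    then have "card ((\<lambda>i. (f ^^ i) a) ` {..card A}) = Suc (card A)" by (simp add: card_image)
    moreover have "(\<lambda>i. (f ^^ i) a) ` {..card A} \<subseteq> A" using fA assms(3) by auto
    moreover have "card ((\<lambda>i. (f ^^ i) a) ` {..card A}) \<le> card A"
      using card_mono[OF assms(1)] calculation(2) by blast
    ultimately show False by simp
  qed
  then obtain i j where ij: "i < j" "(f ^^ i) a = (f ^^ j) a"
    unfolding inj_on_def by (metis linorder_neqE_nat)
  define w where "w = (f ^^ i) a"
  have wA: "w \<in> A" using fA assms(3) by (simp add: w_def)
  have "(f ^^ (j - i)) w = w"
    using fpa[where F=f and a=i and b="j - i" and s=a] ij by (simp add: w_def)
  then have ex: "0 < j - i \<and> (f ^^ (j - i)) w = w" using ij by simp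
  define k where "k = (LEAST k. 0 < k \<and> (f ^^ k) w = w)"
  have k: "0 < k \<and> (f ^^ k) w = w" unfolding k_def by (rule LeastI[of _ "j - i"]) (rule ex)
  have "(f ^^ d) w \<noteq> w" if "0 < d" "d < k" for d
    using not_less_Least[of d "\<lambda>k. 0 < k \<and> (f ^^ k) w = w"] that by (auto simp: k_def)
  then have "per f w k" using k by (simp add: per_def)
  then show ?thesis using wA by blast
qed

lemma concat_rep_nth: "c \<noteq> [] \<Longrightarrow> r < r' \<Longrightarrow> concat (replicate r' c) ! (r * length c) = hd c"
proof -
  assume c: "c \<noteq> []" and r: "r < r'"
  obtain d where d0: "r' = Suc (r + d)" using less_imp_Suc_add[OF r] by (elim exE)
  then have d: "r' = r + Suc d" by simp
  have "replicate r' c = replicate r c @ replicate (Suc d) c" unfolding d by (rule replicate_add)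
  then have e: "concat (replicate r' c) = concat (replicate r c) @ (c @ concat (replicate d c))" by simp
  have l: "length (concat (replicate r c)) = r * length c" by (simp add: length_concat sum_list_replicate)
  have "concat (replicate r' c) ! (r * length c) = (c @ concat (replicate d c)) ! 0"
    unfolding e using nth_append_length_plus[of "concat (replicate r c)" "c @ concat (replicate d c)" 0] l by simp
  also have "\<dots> = hd c" using c by (simp add: hd_conv_nth nth_append)
  finally show ?thesis .
qed

context VS begin

lemma cr_inj: "inj cr" by (auto simp: inj_def)
lemma crs_cr: "crs (cr z)" by (simp add: crs_def)

lemma cyc_valid_per: "fst st \<in> oports DD \<Longrightarrow> cyc F crs st Q l \<Longrightarrow> \<exists>z. per g z l"
proof -
  assume v: "fst st \<in> oports DD" and c: "cyc F crs st Q l"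
  obtain t where t: "crs ((F ^^ t) st)" using reach[OF v] by blast
  then have e: "(F ^^ t) st = cr (snd ((F ^^ t) st))" by (simp add: crs_def prod_eq_iff)
  have "cyc F crs (cr (snd ((F ^^ t) st))) Q l" using cyc_rot[OF c, of t] e by simp
  then have "per g (snd ((F ^^ t) st)) l"
    by (rule cyc_per[where F=F and c=crs and cr=cr, OF g_step crs_cr cr_inj])
  then show ?thesis by blast
qed

lemma cover_per:
  assumes "cyc F crs ((F ^^ t) (cr y)) Q l"
  shows "(g ^^ l) y = y"
proof -
  obtain c where c: "(F ^^ c) (cr y) = cr ((g ^^ t) y)" "ncr F crs (cr y) c = t"
    using cross_times[where F=F and cr=cr and g=g and c=crs, OF g_step] by blast
  have "t \<le> c" using c(2) ncr_le[of F crs "cr y" c] by simp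
  then have "(F ^^ c) (cr y) = (F ^^ (c - t)) ((F ^^ t) (cr y))"
    using fpa[where F=F and a=t and b="c - t" and s="cr y"] by simp
  then have "cyc F crs (cr ((g ^^ t) y)) Q l" using cyc_rot[OF assms, of "c - t"] c(1) by simp
  then have "per g ((g ^^ t) y) l"
    by (rule cyc_per[where F=F and c=crs and cr=cr, OF g_step crs_cr cr_inj])
  then have "(g ^^ l) ((g ^^ t) y) = (g ^^ t) y" by (simp add: per_def)
  then have "(g ^^ t) ((g ^^ l) y) = (g ^^ t) y" by (simp add: funpow_comm_app)
  then show ?thesis using inj_fn[OF g_inj, of t] by (simp add: inj_def)
qed

lemma part_i:
  assumes I: "Inv D" and e: "sS D = {}" "sM D = {}"
  shows "(\<exists>k>0. (g ^^ k) = id) \<and> (LEAST k. k > 0 \<and> (g ^^ k) = id) = Lcm (set_mset (sloops D))"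
proof -
  have o: "oports D = {}" using e by (simp add: oports_def)
  have cov: "\<exists>l\<in>#sloops D. (g ^^ l) y = y" for y
  proof -
    obtain t where "fst ((F ^^ t) (cr y)) \<in> oports D \<or> (\<exists>l\<in>#sloops D. \<exists>Q. cyc F crs ((F ^^ t) (cr y)) Q l)"
      using I unfolding Inv_def covI_def by blast
    then obtain l Q where "l \<in># sloops D" "cyc F crs ((F ^^ t) (cr y)) Q l" using o by blast
    then show ?thesis using cover_per by blast
  qed
  have lp: "\<exists>z. per g z l" if "l \<in># sloops D" for l
  proof -
    have li: "loopI D" using I by (simp add: Inv_def)
    have "\<exists>st Q. fst st \<in> oports DD \<and> cyc F crs st Q l" using li[unfolded loopI_def] that by (rule bspec)
    then obtain st Q where "fst st \<in> oports DD" "cyc F crs st Q l" by blast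
    then show ?thesis using cyc_valid_per by blast
  qed
  define L where "L = Lcm (set_mset (sloops D))"
  have L0: "0 < L"
  proof -
    have "0 \<notin> set_mset (sloops D)" using lp by (fastforce simp: per_def)
    moreover have "Lcm (set_mset (sloops D)) = (0::nat) \<longleftrightarrow> 0 \<in> set_mset (sloops D)"
      by (rule Lcm_0_iff) simp
    ultimately have "Lcm (set_mset (sloops D)) \<noteq> (0::nat)" by blast
    then show ?thesis unfolding L_def by (rule neq0_conv[THEN iffD1])
  qed
  have gL: "(g ^^ L) = id"
  proof
    fix y
    obtain l where l: "l \<in># sloops D" "(g ^^ l) y = y" using cov by blast
    have "l dvd L" using l(1) by (simp add: L_def)
    then obtain q where "L = l * q" by (auto simp: dvd_def)
    then show "(g ^^ L) y = id y" using per_funpow[where F=g and Q=l and s=y and k=q, OF l(2)] by (simp add: mult.commute)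
  qed
  have "(LEAST k. k > 0 \<and> (g ^^ k) = id) = L"
  proof (rule Least_equality)
    show "0 < L \<and> (g ^^ L) = id" using L0 gL by simp
  next
    fix k assume k: "0 < k \<and> (g ^^ k) = id"
    have "L dvd k" unfolding L_def
    proof (rule Lcm_least)
      fix l assume "l \<in> set_mset (sloops D)"
      then obtain z where "per g z l" using lp by blast
      then show "l dvd k" using per_dvd k by (metis id_apply)
    qed
    then show "L \<le> k" using k by (simp add: dvd_imp_le)
  qed
  then show ?thesis using L0 gL by (auto simp: L_def)
qed

lemma merge_port: "merge_cycle D es \<Longrightarrow> e \<in> set es \<Longrightarrow> \<exists>w. e = MOut w"
  unfolding merge_cycle_def by (cases e) auto

lemma merge_edge:
  assumes mc: "merge_cycle D es" and i: "i < length es"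
  shows "\<exists>w w' b. es ! i = MOut w \<and> es ! (Suc i mod length es) = MOut w' \<and> stg D (MOut w) = MIn w' b"
proof -
  have ne: "es \<noteq> []" using mc by (simp add: merge_cycle_def is_cycle_def)
  obtain w where w: "es ! i = MOut w" using merge_port[OF mc] i by (meson nth_mem)
  obtain w' where w': "es ! (Suc i mod length es) = MOut w'" using merge_port[OF mc] ne by (meson nth_mem mod_less_divisor length_greater_0_conv)
  have "idst (stg D (es ! i)) = osrc (es ! ((i + 1) mod length es))" using mc i by (simp add: merge_cycle_def is_cycle_def)
  then have "idst (stg D (MOut w)) = MV w'" using w w' by simp
  then obtain b where "stg D (MOut w) = MIn w' b" by (cases "stg D (MOut w)") auto
  then show ?thesis using w w' by blast
qed

lemma merge_round:
  assumes mc: "merge_cycle D es"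
  shows "\<exists>c. length c = j \<and> (\<forall>x. (stepG D ^^ j) (es ! 0, x) = (es ! (j mod length es), prepend c x))"
proof (induction j)
  case 0 then show ?case by (intro exI[of _ "[]"]) simp
next
  case (Suc j)
  then obtain c where c: "length c = j" "\<And>x. (stepG D ^^ j) (es ! 0, x) = (es ! (j mod length es), prepend c x)" by blast
  have ne: "es \<noteq> []" using mc by (simp add: merge_cycle_def is_cycle_def)
  obtain w w' b where e: "es ! (j mod length es) = MOut w" "es ! (Suc (j mod length es) mod length es) = MOut w'"
    "stg D (MOut w) = MIn w' b" using merge_edge[OF mc, of "j mod length es"] ne by auto
  have m: "Suc (j mod length es) mod length es = Suc j mod length es" by (simp add: mod_Suc_eq)
  have "(stepG D ^^ Suc j) (es ! 0, x) = (es ! (Suc j mod length es), prepend (b # c) x)" for x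
    using c(2)[of x] e m by (simp add: stepG_MIn prepend_append[symmetric])
  then show ?case using c(1) by (intro exI[of _ "b # c"]) simp
qed

lemma orbit_finite:
  assumes k: "0 < k" "(g ^^ k) = id" and v: "fst st \<in> oports DD"
  shows "finite (range (\<lambda>t. (F ^^ t) st))"
proof -
  obtain t0 where t0: "crs ((F ^^ t0) st)" using reach[OF v] by blast
  define z where "z = snd ((F ^^ t0) st)"
  have e: "(F ^^ t0) st = cr z" using t0 by (simp add: crs_def prod_eq_iff z_def)
  obtain c where c: "(F ^^ c) (cr z) = cr ((g ^^ k) z)" "ncr F crs (cr z) c = k"
    using cross_times[where F=F and cr=cr and g=g and c=crs, OF g_step] by blast
  have cz: "(F ^^ c) (cr z) = cr z" using c(1) k by simp
  have c0: "0 < c" using c(2) k by (cases c) auto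
  have "range (\<lambda>t. (F ^^ t) st) \<subseteq> (\<lambda>t. (F ^^ t) st) ` {..<t0} \<union> (\<lambda>i. (F ^^ i) (cr z)) ` {..<c}"
  proof
    fix s assume "s \<in> range (\<lambda>t. (F ^^ t) st)"
    then obtain t where s: "s = (F ^^ t) st" by blast
    show "s \<in> (\<lambda>t. (F ^^ t) st) ` {..<t0} \<union> (\<lambda>i. (F ^^ i) (cr z)) ` {..<c}"
    proof (cases "t < t0")
      case True then show ?thesis using s by blast
    next
      case False
      then have "s = (F ^^ (t - t0)) (cr z)" using s e fpa[where F=F and a=t0 and b="t - t0" and s=st] by simp
      also have "\<dots> = (F ^^ ((t - t0) mod c)) ((F ^^ ((t - t0) div c * c)) (cr z))"
        using fpa[where F=F and a="(t - t0) div c * c" and b="(t - t0) mod c" and s="cr z"] by (simp add: add.commute)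
      also have "\<dots> = (F ^^ ((t - t0) mod c)) (cr z)" using per_funpow[where F=F and Q=c, OF cz] by simp
      finally show ?thesis using c0 by auto
    qed
  qed
  then show ?thesis by (rule finite_subset) auto
qed

lemma part_ii:
  assumes I: "Inv D" and red: "reduced D" and ne: "sS D \<union> sM D \<noteq> {}"
  shows "\<not> (\<exists>k>0. (g ^^ k) = id) \<and> (\<exists>es. is_cycle D es) \<and>
     (\<forall>es. merge_cycle D es \<longrightarrow> finite_orbit_length g (sum_list (map (slb D) es)))"
proof -
  have wf: "wf D" and sem: "semI D" using I by (auto simp: Inv_def)
  have fin: "finite (sS D)" "finite (sM D)" "card (sS D) = card (sM D)" using wf by (auto simp: wf_def)
  have Mne: "sM D \<noteq> {}"
  proof
    assume "sM D = {}"
    then have "sS D = {}" using fin by simp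
    then show False using ne \<open>sM D = {}\<close> by simp
  qed
  then obtain a where a: "a \<in> sM D" by blast
  have nxt: "\<exists>w' b. stg D (MOut w) = MIn w' b \<and> w' \<in> sM D" if w: "w \<in> sM D" for w
  proof -
    have "idst (stg D (MOut w)) \<in> vtxs D" using wf w by (simp add: wf_def oports_def)
    moreover have "\<not> (\<exists>s\<in>sS D. stg D (MOut w) = SIn s)" using red w by (auto simp: reduced_def)
    ultimately show ?thesis by (cases "stg D (MOut w)") (auto simp: vtxs_def)
  qed
  define nx where "nx w = (SOME w'. \<exists>b. stg D (MOut w) = MIn w' b \<and> w' \<in> sM D)" for w
  have nx: "\<exists>b. stg D (MOut w) = MIn (nx w) b" "nx w \<in> sM D" if "w \<in> sM D" for w
    using someI_ex[OF nxt[OF that]] by (auto simp: nx_def)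
  obtain w k where w: "w \<in> sM D" and pk: "per nx w k"
  proof -
    have nxA1: "\<And>x. x \<in> sM D \<Longrightarrow> nx x \<in> sM D" using nx(2) by blast
    show ?thesis using periodic_point[where f=nx, OF fin(2) nxA1 a] that by blast
  qed
  have k0: "0 < k" "(nx ^^ k) w = w" using pk by (auto simp: per_def)
  have nxA: "(nx ^^ i) w \<in> sM D" for i using w nx(2) by (induction i) auto
  define es where "es = map (\<lambda>i. MOut ((nx ^^ i) w)) [0..<k]"
  have les: "length es = k" by (simp add: es_def)
  have cyc_es: "is_cycle D es"
    unfolding is_cycle_def
  proof (intro conjI allI impI)
    show "es \<noteq> []" using k0 by (simp add: es_def)
    show "set es \<subseteq> oports D" using nxA by (auto simp: es_def oports_def)
    have "distinct (map (\<lambda>i. MV ((nx ^^ i) w)) [0..<k])"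
      using per_inj[OF pk] by (simp add: distinct_map inj_on_def atLeast0LessThan)
    then show "distinct (map osrc es)" by (simp add: es_def comp_def)
    fix i assume i: "i < length es"
    obtain b where b: "stg D (MOut ((nx ^^ i) w)) = MIn (nx ((nx ^^ i) w)) b" using nx(1)[OF nxA[of i]] by blast
    have "(nx ^^ Suc i) w = (nx ^^ ((i + 1) mod k)) w"
    proof (cases "Suc i < k")
      case True then show ?thesis by simp
    next
      case False then have "Suc i = k" using i les by simp
      then show ?thesis using k0 by simp
    qed
    then show "idst (stg D (es ! i)) = osrc (es ! ((i + 1) mod length es))"
      using b i les k0 by (simp add: es_def)
  qed
  have mc_es: "merge_cycle D es" using cyc_es by (auto simp: merge_cycle_def es_def)
  have round: "\<exists>c. length c = length es' \<and> (\<forall>x. (stepG D ^^ length es') (es' ! 0, x) = (es' ! 0, prepend c x))"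
    if mc: "merge_cycle D es'" for es'
    using merge_round[OF mc, of "length es'"] by simp
  have notors: "\<not> (\<exists>k>0. (g ^^ k) = id)"
  proof
    assume "\<exists>k>0. (g ^^ k) = id"
    then obtain k' where k': "0 < k'" "(g ^^ k') = id" by blast
    obtain c where c: "length c = k" "\<And>x. (stepG D ^^ k) (es ! 0, x) = (es ! 0, prepend c x)"
      using round[OF mc_es] les by blast
    have cne: "c \<noteq> []" using c(1) k0 by auto
    have it: "(stepG D ^^ (r * k)) (es ! 0, x) = (es ! 0, prepend (concat (replicate r c)) x)" for r x
    proof (induction r)
      case (Suc r)
      have "(stepG D ^^ (Suc r * k)) (es ! 0, x) = (stepG D ^^ k) ((stepG D ^^ (r * k)) (es ! 0, x))"
        using fpa[where F="stepG D" and a="r * k" and b=k and s="(es ! 0, x)"] by (simp add: add.commute)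
      then show ?case using Suc c(2) by (simp add: prepend_append)
    qed simp
    define x0 where "x0 = (\<lambda>_::nat. \<not> hd c)"
    define P where "P r = prepend (concat (replicate r c)) x0" for r
    have e0: "es ! 0 \<in> oports D" using cyc_es k0 les by (auto simp: is_cycle_def)
    have v0: "fst (es ! 0, x0) \<in> oports D" using e0 by simp
    have sub: "range (\<lambda>r. (es ! 0, P r)) \<subseteq> range (\<lambda>t. (F ^^ t) (es ! 0, x0))"
    proof
      fix s assume "s \<in> range (\<lambda>r. (es ! 0, P r))"
      then obtain r where "s = (es ! 0, P r)" by blast
      then have "s = (F ^^ dT D (es ! 0, x0) (r * k)) (es ! 0, x0)"
        using dT_prop[OF wf sem v0, of "r * k"] it[of r x0] by (simp add: P_def)
      then show "s \<in> range (\<lambda>t. (F ^^ t) (es ! 0, x0))" by blast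
    qed
    have "finite (range (\<lambda>t. (F ^^ t) (es ! 0, x0)))"
      using orbit_finite[OF k'] wf_valid[OF wf e0] by simp
    then have f: "finite (range (\<lambda>r. (es ! 0, P r)))" using sub finite_subset by blast
    have "inj (\<lambda>r. (es ! 0, P r))"
    proof (rule injI)
      fix r r' assume "(es ! 0, P r) = (es ! 0, P r')"
      then have eq: "P r = P r'" by simp
      show "r = r'"
      proof (rule ccontr)
        assume "r \<noteq> r'"
        then consider "r < r'" | "r' < r" by linarith
        then show False
        proof cases
          case 1
          have "P r (r * k) = x0 0" by (simp add: P_def prepend_def length_concat sum_list_replicate c(1))
          moreover have "P r' (r * k) = hd c" using concat_rep_nth[OF cne 1] 1 c(1) k0(1)
            by (simp add: P_def prepend_def length_concat sum_list_replicate)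
          ultimately show False using eq by (simp add: x0_def)
        next
          case 2
          have "P r' (r' * k) = x0 0" by (simp add: P_def prepend_def length_concat sum_list_replicate c(1))
          moreover have "P r (r' * k) = hd c" using concat_rep_nth[OF cne 2] 2 c(1) k0(1)
            by (simp add: P_def prepend_def length_concat sum_list_replicate)
          ultimately show False using eq by (simp add: x0_def)
        qed
      qed
    qed
    then show False using f finite_imageD by (metis infinite_UNIV_nat)
  qed
  have orb: "finite_orbit_length g (sum_list (map (slb D) es'))" if mc: "merge_cycle D es'" for es'
  proof -
    define n where "n = length es'"
    have ic: "is_cycle D es'" using mc by (simp add: merge_cycle_def)
    have n0: "0 < n" using ic by (simp add: is_cycle_def n_def)
    obtain c where c: "length c = n" "\<And>x. (stepG D ^^ n) (es' ! 0, x) = (es' ! 0, prepend c x)"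
      using round[OF mc] n_def by blast
    define xp where "xp = (\<lambda>i. c ! (i mod n))"
    have xp: "prepend c xp = xp"
    proof
      fix i show "prepend c xp i = xp i"
        using n0 c(1) by (auto simp: prepend_def xp_def le_mod_geq not_less)
    qed
    define st where "st = (es' ! 0, xp)"
    have st_ret: "(stepG D ^^ n) st = st" using c(2)[of xp] xp by (simp add: st_def)
    have dist: "distinct es'" using ic by (auto simp: is_cycle_def distinct_map)
    have stp: "fst ((stepG D ^^ i) st) = es' ! i" if "i < n" for i
      using merge_round[OF mc, of i] that by (auto simp: st_def n_def)
    have nr: "(stepG D ^^ i) st \<noteq> st" if "0 < i" "i < n" for i
    proof
      assume "(stepG D ^^ i) st = st"
      then have "es' ! i = es' ! 0" using stp[OF that(2)] by (simp add: st_def)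
      moreover have "es' \<noteq> []" using that by (auto simp: n_def)
      ultimately show False using dist that nth_eq_iff_index_eq[OF dist, of i 0] by (simp add: n_def)
    qed
    have e0: "es' ! 0 \<in> oports D" using ic n0 by (auto simp: is_cycle_def n_def)
    have cy: "cyc F crs st (dT D st n) (\<Sum>i<n. slb D (fst ((stepG D ^^ i) st)))"
      by (rule dcycle[OF wf sem _ n0 st_ret nr]) (simp add: st_def e0)
    have "(\<Sum>i<n. slb D (fst ((stepG D ^^ i) st))) = (\<Sum>i<n. slb D (es' ! i))" using stp by simp
    also have "\<dots> = sum_list (map (slb D) es')" by (simp add: sum_list_sum_nth atLeast0LessThan n_def)
    finally have "cyc F crs st (dT D st n) (sum_list (map (slb D) es'))" using cy by simp
    moreover have "fst st \<in> oports DD" using wf_valid[OF wf e0] by (simp add: st_def)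
    ultimately have "\<exists>z. per g z (sum_list (map (slb D) es'))" using cyc_valid_per by blast
    then obtain z where "per g z (sum_list (map (slb D) es'))" by blast
    then have "finite (range (\<lambda>j. (g ^^ j) z)) \<and> card (range (\<lambda>j. (g ^^ j) z)) = sum_list (map (slb D) es')"
      by (rule per_orbit)
    then show ?thesis unfolding finite_orbit_length_def by blast
  qed
  show ?thesis using notors cyc_es orb by blast
qed

end


theorem mainTheorem2:
  fixes Tm Tp :: tree and \<sigma> :: "nat \<Rightarrow> nat" and D :: sdiag
  assumes "length (leaves Tm) = length (leaves Tp)"
    and "bij_betw \<sigma> {..<length (leaves Tm)} {..<length (leaves Tm)}"
    and "rule1_step\<^sup>*\<^sup>* (D0 Tm Tp \<sigma>) D"
    and "reduced D"
  shows "(sS D = {} \<and> sM D = {} \<longrightarrow>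
            (\<exists>k>0. (velem Tm Tp \<sigma> ^^ k) = id) \<and>
            (LEAST k. k > 0 \<and> (velem Tm Tp \<sigma> ^^ k) = id) = Lcm (set_mset (sloops D)))
       \<and> (sS D \<union> sM D \<noteq> {} \<longrightarrow>
            \<not> (\<exists>k>0. (velem Tm Tp \<sigma> ^^ k) = id) \<and>
            (\<exists>es. is_cycle D es) \<and>
            (\<forall>es. merge_cycle D es \<longrightarrow>
                 finite_orbit_length (velem Tm Tp \<sigma>) (sum_list (map (slb D) es))))"
proof (cases "Tm = Leaf")
  case False
  interpret VS Tm Tp \<sigma> using assms(1,2) False by unfold_locales
  have I: "Inv D" using Inv_reach assms(3) by (simp add: DD_def)
  have gdef: "velem Tm Tp \<sigma> = g" by (simp add: g_def)
  show ?thesis using part_i[OF I] part_ii[OF I assms(4)] unfolding gdef by blast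
next
  case True
  then have tp: "Tp = Leaf" using assms(1) Leaf_iff by auto
  have nos: "\<not> rule1_step (D0 Tm Tp \<sigma>) D'" for D'
    using True tp by (simp add: rule1_step_def D0_def)
  have D: "D = D0 Tm Tp \<sigma>"
    using assms(3) by (rule converse_rtranclpE) (use nos in auto)
  have s0: "\<sigma> 0 = 0" using assms(2) True by (auto simp: bij_betw_def)
  have gid: "velem Tm Tp \<sigma> = id"
  proof
    fix x
    have "(THE i. i < length (leaves Tm) \<and> in_cone (leaves Tm ! i) x) = 0"
      using True by (auto simp: in_cone_def)
    then show "velem Tm Tp \<sigma> x = id x" using True tp s0 by (simp add: velem_def prepend_def)
  qed
  have L: "(LEAST k. k > 0 \<and> (velem Tm Tp \<sigma> ^^ k) = id) = 1"
    by (rule Least_equality) (auto simp: gid)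
  have e: "sS D = {}" "sM D = {}" "sloops D = {#1#}" using D True tp by (auto simp: D0_def)
  show ?thesis using L e gid by auto
qed


end
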